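(* Consider the linear model $\mathbf{y}=\mathbf{X}\boldsymbol\beta+\boldsymbol\epsilon$, $\boldsymbol\epsilon\sim\mathrm{N}(\mathbf 0,\sigma^2\mathbf I_n)$, with $\mathbf X^\top\mathbf X=\mathbf I_p$, coefficients partitioned into $G$ groups of cardinalities $n_1,\dots,n_G$, $\widehat{\boldsymbol\beta}^{\mathsf{LS}}=\mathbf X^\top\mathbf y$, weights $w_g=1/\|\widehat{\boldsymbol\beta}^{\mathsf{LS}}_g\|_2$, and the Adaptive Group Lasso $\widehat{\boldsymbol\beta}=\arg\min_{\boldsymbol\beta}\tfrac12\|\mathbf y-\mathbf X\boldsymbol\beta\|_2^2+\gamma\sum_g w_g\|\boldsymbol\beta_g\|_2$ with $\gamma\in(\gamma_l,\gamma_{l+1})$ for consecutive transition points. Let $\mathcal A_G=\{g:\|\widehat{\boldsymbol\beta}_g\|_2\ne0\}$. Then an unbiased estimate of the degrees of freedom of $\widehat{\mathbf y}_\gamma=\mathbf X\widehat{\boldsymbol\beta}$ is $$\widehat{df}_\gamma=\mathrm{trace}\big[(\mathbf I_n+\gamma\mathbf B)^{-1}(\mathbf A+\gamma\mathbf C)\big],$$ where $\mathbf A=\mathbf X_{\mathcal A_G}\mathbf X_{\mathcal A_G}^\top$, $\mathbf B=\mathbf X_{\mathcal A_G}\boldsymbol\Pi_{\mathcal A_G}\mathbf X_{\mathcal A_G}^\top$, $\mathbf C=\mathbf X_{\mathcal A_G}\boldsymbol\Phi_{\mathcal A_G}\mathbf X_{\mathcal A_G}^\top$, $$\boldsymbol\Pi_{\mathcal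 A_G}=\mathrm{blockdiag}_{g\in\mathcal A_G}\Big(w_g\Big[\frac{\mathbf I_{n_g}}{\|\widehat{\boldsymbol\beta}_g\|_2}-\frac{\widehat{\boldsymbol\beta}_g\widehat{\boldsymbol\beta}_g^\top}{\|\widehat{\boldsymbol\beta}_g\|_2^3}\Big]\Big),\qquad\boldsymbol\Phi_{\mathcal A_G}=\mathrm{blockdiag}_{g\in\mathcal A_G}\Big(\frac{\widehat{\boldsymbol\beta}_g}{\|\widehat{\boldsymbol\beta}_g\|_2}\frac{(\widehat{\boldsymbol\beta}^{\mathsf{LS}}_g)^\top}{\|\widehat{\boldsymbol\beta}^{\mathsf{LS}}_g\|_2^3}\Big).$$
   Context: $\boldsymbol\beta_g$, $\widehat{\boldsymbol\beta}_g$, $\widehat{\boldsymbol\beta}^{\mathsf{LS}}_g\in\mathbb R^{n_g}$ are the subvectors for group $g$; $\mathbf X_{\mathcal A_G}$ is the matrix of columns of $\mathbf X$ in active groups (group order). Degrees of freedom: $df(\widehat{\mathbf y})=\sigma^{-2}\sum_i\mathrm{Cov}(y_i,\widehat y_i)$ ($=\mathbb E[\mathrm{trace}(\partial\widehat{\mathbf y}/\partial\mathbf y)]$); an unbiased estimate is a statistic with that expectation. Transition points are the values of $\gamma>0$ where the active set changes, for fixed data. *)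

theory Defs
  imports "HOL-Probability.Probability"
begin

definition gnorm :: "('p::finite \<Rightarrow> 'g) \<Rightarrow> real^'p \<Rightarrow> 'g \<Rightarrow> real" where
  "gnorm grp v g = sqrt (\<Sum>j\<in>{j. grp j = g}. (v $ j)\<^sup>2)"

text \<open>Least squares estimate (X^T X = I).\<close>
definition betaLS :: "real^'p^'n \<Rightarrow> real^'n \<Rightarrow> real^'p" where
  "betaLS X y = transpose X *v y"

definition agl_weight :: "real^'p^'n \<Rightarrow> ('p::finite \<Rightarrow> 'g) \<Rightarrow> real^'n \<Rightarrow> 'g \<Rightarrow> real" where
  "agl_weight X grp y g = 1 / gnorm grp (betaLS X y) g"

definition agl_obj :: "real^'p^'n \<Rightarrow> ('p::finite \<Rightarrow> 'g::finite) \<Rightarrow> real \<Rightarrow> real^'n \<Rightarrow> real^'p \<Rightarrow> real" where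
  "agl_obj X grp \<gamma> y b =
     1/2 * (norm (y - X *v b))\<^sup>2 + \<gamma> * (\<Sum>g\<in>UNIV. agl_weight X grp y g * gnorm grp b g)"

definition agl_beta :: "real^'p^'n \<Rightarrow> ('p::finite \<Rightarrow> 'g::finite) \<Rightarrow> real \<Rightarrow> real^'n \<Rightarrow> real^'p" where
  "agl_beta X grp \<gamma> y = (THE b. \<forall>b'. agl_obj X grp \<gamma> y b \<le> agl_obj X grp \<gamma> y b')"

definition agl_fit :: "real^'p^'n \<Rightarrow> ('p::finite \<Rightarrow> 'g::finite) \<Rightarrow> real \<Rightarrow> real^'n \<Rightarrow> real^'n" where
  "agl_fit X grp \<gamma> y = X *v agl_beta X grp \<gamma> y"

definition agl_active :: "real^'p^'n \<Rightarrow> ('p::finite \<Rightarrow> 'g::finite) \<Rightarrow> real \<Rightarrow> real^'n \<Rightarrow> 'g set" where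
  "agl_active X grp \<gamma> y = {g. gnorm grp (agl_beta X grp \<gamma> y) g \<noteq> 0}"

text \<open>X_{A_G}: the columns of X in active groups; columns of inactive groups are
  replaced by zero columns (this does not change X_A M X_A^T for the block matrices
  below, whose blocks are indexed by the active coordinates only).\<close>
definition XA :: "real^'p^'n \<Rightarrow> ('p::finite \<Rightarrow> 'g::finite) \<Rightarrow> real \<Rightarrow> real^'n \<Rightarrow> real^'p^'n" where
  "XA X grp \<gamma> y = (\<chi> i j. if grp j \<in> agl_active X grp \<gamma> y then X $ i $ j else 0)"

definition PiA :: "real^'p^'n \<Rightarrow> ('p::finite \<Rightarrow> 'g::finite) \<Rightarrow> real \<Rightarrow> real^'n \<Rightarrow> real^'p^'p" where
  "PiA X grp \<gamma> y = (let bh = agl_beta X grp \<gamma> y in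
     (\<chi> j k. if grp j = grp k \<and> grp j \<in> agl_active X grp \<gamma> y then
        agl_weight X grp y (grp j) *
          ((if j = k then 1 else 0) / gnorm grp bh (grp j)
           - bh $ j * bh $ k / (gnorm grp bh (grp j)) ^ 3)
      else 0))"

definition PhiA :: "real^'p^'n \<Rightarrow> ('p::finite \<Rightarrow> 'g::finite) \<Rightarrow> real \<Rightarrow> real^'n \<Rightarrow> real^'p^'p" where
  "PhiA X grp \<gamma> y = (let bh = agl_beta X grp \<gamma> y; bl = betaLS X y in
     (\<chi> j k. if grp j = grp k \<and> grp j \<in> agl_active X grp \<gamma> y then
        (bh $ j / gnorm grp bh (grp j)) * (bl $ k / (gnorm grp bl (grp j)) ^ 3)
      else 0))"

definition dfhat :: "real^'p^'n \<Rightarrow> ('p::finite \<Rightarrow> 'g::finite) \<Rightarrow> real \<Rightarrow> real^'n \<Rightarrow> real" where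
  "dfhat X grp \<gamma> y = (let Xa = XA X grp \<gamma> y;
      A = Xa ** transpose Xa;
      B = Xa ** PiA X grp \<gamma> y ** transpose Xa;
      C = Xa ** PhiA X grp \<gamma> y ** transpose Xa
    in trace (matrix_inv (mat 1 + \<gamma> *\<^sub>R B) ** (A + \<gamma> *\<^sub>R C)))"

definition gauss_vec :: "real^'n::finite \<Rightarrow> real \<Rightarrow> (real^'n) measure" where
  "gauss_vec \<mu> \<sigma> = density lborel (\<lambda>y. ennreal (\<Prod>i\<in>UNIV. normal_density (\<mu> $ i) \<sigma> (y $ i)))"

definition covar :: "'a measure \<Rightarrow> ('a \<Rightarrow> real) \<Rightarrow> ('a \<Rightarrow> real) \<Rightarrow> real" where
  "covar M f g = (LINT y|M. (f y - (LINT z|M. f z)) * (g y - (LINT z|M. g z)))"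

definition dof :: "(real^'n::finite) measure \<Rightarrow> real \<Rightarrow> (real^'n \<Rightarrow> real^'n) \<Rightarrow> real" where
  "dof M \<sigma> yh = (1 / \<sigma>\<^sup>2) * (\<Sum>i\<in>UNIV. covar M (\<lambda>y. y $ i) (\<lambda>y. yh y $ i))"

end

theory Submission imports Defs "HOL-Real_Asymp.Real_Asymp" "HOL-Library.Quadratic_Discriminant" begin

lemma normal_density_deriv:
  assumes "0 < \<sigma>"
  shows "(normal_density m \<sigma> has_real_derivative (- (t - m) / \<sigma>\<^sup>2 * normal_density m \<sigma> t)) (at t)"
proof -
  define c where "c = 1 / sqrt (2 * pi * \<sigma>\<^sup>2)"
  have e: "normal_density m \<sigma> = (\<lambda>t. c * exp (- (t - m)\<^sup>2 / (2 * \<sigma>\<^sup>2)))"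
    by (simp add: normal_density_def c_def fun_eq_iff)
  have "((\<lambda>t. c * exp (- (t - m)\<^sup>2 / (2 * \<sigma>\<^sup>2))) has_real_derivative
      c * (exp (- (t - m)\<^sup>2 / (2 * \<sigma>\<^sup>2)) * (- (2 * (t - m)) / (2 * \<sigma>\<^sup>2)))) (at t)"
    using assms by (auto intro!: derivative_eq_intros simp: field_simps)
  then show ?thesis unfolding e
    by (rule DERIV_cong) (use assms in \<open>simp add: field_simps\<close>)
qed

lemma stein1d:
  fixes f f' :: "real \<Rightarrow> real"
  assumes \<sigma>: "0 < \<sigma>" and S: "finite S" and cont: "continuous_on UNIV f"
    and der: "\<And>t. t \<notin> S \<Longrightarrow> (f has_real_derivative f' t) (at t)"
    and meas: "f' \<in> borel_measurable borel"
    and bd: "\<And>t. \<bar>f' t\<bar> \<le> K" and gr: "\<And>t. \<bar>f t\<bar> \<le> A + B * \<bar>t\<bar>"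
  shows "integrable lborel (\<lambda>t. normal_density m \<sigma> t * ((t - m) * f t))"
    "integrable lborel (\<lambda>t. normal_density m \<sigma> t * f' t)"
    "(\<integral>t. normal_density m \<sigma> t * ((t - m) * f t) \<partial>lborel)
       = \<sigma>\<^sup>2 * (\<integral>t. normal_density m \<sigma> t * f' t \<partial>lborel)"
proof -
  let ?\<phi> = "normal_density m \<sigma>"
  have B0: "0 \<le> B"
  proof (rule ccontr)
    assume "\<not> 0 \<le> B"
    then have "B < 0" by simp
    have "\<bar>f (\<bar>A\<bar> / (- B) + 1)\<bar> \<le> A + B * \<bar>\<bar>A\<bar> / (- B) + 1\<bar>" by (rule gr)
    also have "\<dots> = A + B * (\<bar>A\<bar> / (- B) + 1)"
      using \<open>B < 0\<close> by simp
    also have "\<dots> = A - \<bar>A\<bar> + B" using \<open>B < 0\<close> by (simp add: field_simps)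
    also have "\<dots> < 0" using \<open>B < 0\<close> by simp
    finally show False by simp
  qed
  have A0: "0 \<le> A" using gr[of 0] by simp
  have fmeas: "f \<in> borel_measurable borel"
    using cont by (rule borel_measurable_continuous_onI)
  have phinn: "\<And>t. 0 \<le> ?\<phi> t" by (rule normal_density_nonneg)
  have i1: "integrable lborel (\<lambda>t. ?\<phi> t * \<bar>t - m\<bar> ^ 1)"
    using integrable_normal_moment_abs[OF \<sigma>] by blast
  have i2: "integrable lborel (\<lambda>t. ?\<phi> t * \<bar>t - m\<bar> ^ 2)"
    using integrable_normal_moment_abs[OF \<sigma>] by blast
  have i0: "integrable lborel ?\<phi>" using \<sigma> by simp
  let ?F = "\<lambda>t. (A + B * \<bar>m\<bar>) * (?\<phi> t * \<bar>t - m\<bar> ^ 1) + B * (?\<phi> t * \<bar>t - m\<bar> ^ 2)"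
  have iF: "integrable lborel ?F"
    using i1 i2 by (intro Bochner_Integration.integrable_add integrable_mult_right) auto
  show int1: "integrable lborel (\<lambda>t. ?\<phi> t * ((t - m) * f t))"
  proof (rule Bochner_Integration.integrable_bound[OF iF])
    show "(\<lambda>t. ?\<phi> t * ((t - m) * f t)) \<in> borel_measurable lborel"
      using fmeas by measurable
    show "AE t in lborel. norm (?\<phi> t * ((t - m) * f t)) \<le> norm (?F t)"
    proof (rule AE_I2)
      fix t
      have "\<bar>f t\<bar> \<le> A + B * \<bar>m\<bar> + B * \<bar>t - m\<bar>"
        using gr[of t] B0 abs_triangle_ineq[of m "t - m"] mult_left_mono[of "\<bar>t\<bar>" "\<bar>m\<bar> + \<bar>t - m\<bar>" B]
        by (simp add: distrib_left)
      then have "?\<phi> t * \<bar>t - m\<bar> * \<bar>f t\<bar> \<le> ?\<phi> t * \<bar>t - m\<bar> * (A + B * \<bar>m\<bar> + B * \<bar>t - m\<bar>)"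
        by (intro mult_left_mono) (auto simp: phinn)
      also have "\<dots> = ?F t"
        by (simp add: algebra_simps power2_eq_square)
      finally have "?\<phi> t * \<bar>t - m\<bar> * \<bar>f t\<bar> \<le> ?F t" .
      moreover have "0 \<le> ?F t"
        using B0 A0 phinn[of t] by simp
      ultimately show "norm (?\<phi> t * ((t - m) * f t)) \<le> norm (?F t)"
        using phinn[of t] by (simp add: abs_mult)
    qed
  qed
  show int2: "integrable lborel (\<lambda>t. ?\<phi> t * f' t)"
  proof (rule Bochner_Integration.integrable_bound[where f="\<lambda>t. K * ?\<phi> t"])
    show "integrable lborel (\<lambda>t. K * ?\<phi> t)" using i0 by auto
    show "(\<lambda>t. ?\<phi> t * f' t) \<in> borel_measurable lborel" using meas by measurable
    show "AE t in lborel. norm (?\<phi> t * f' t) \<le> norm (K * ?\<phi> t)"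
    proof (rule AE_I2)
      fix t
      have "?\<phi> t * \<bar>f' t\<bar> \<le> ?\<phi> t * K" by (intro mult_left_mono bd phinn)
      then show "norm (?\<phi> t * f' t) \<le> norm (K * ?\<phi> t)"
        using phinn[of t] bd[of t] by (simp add: abs_mult mult.commute)
    qed
  qed
  define W :: "real \<Rightarrow> real" where "W t = \<sigma>\<^sup>2 * (?\<phi> t * f' t) - ?\<phi> t * ((t - m) * f t)" for t
  define H :: "real \<Rightarrow> real" where "H t = \<sigma>\<^sup>2 * ?\<phi> t * f t" for t
  have intW: "integrable lborel W" unfolding W_def using int1 int2 by auto
  have Hder: "(H has_real_derivative W t) (at t)" if "t \<notin> S" for t
  proof -
    have "(H has_real_derivative \<sigma>\<^sup>2 * (- (t - m) / \<sigma>\<^sup>2 * ?\<phi> t) * f t + \<sigma>\<^sup>2 * ?\<phi> t * f' t) (at t)"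
      unfolding H_def
      by (auto intro!: derivative_eq_intros normal_density_deriv[OF \<sigma>] der[OF that])
    then show ?thesis unfolding W_def
      by (rule DERIV_cong) (use \<sigma> in \<open>simp add: field_simps\<close>)
  qed
  have phicont: "continuous_on UNIV ?\<phi>"
    by (rule DERIV_continuous_on) (rule normal_density_deriv[OF \<sigma>])
  have Hcont: "continuous_on UNIV H"
    unfolding H_def using cont phicont by (intro continuous_intros) auto
  have FTC: "(W has_integral (H (real k + 1) - H (- (real k + 1)))) {- (real k + 1) .. real k + 1}" for k :: nat
    apply (rule fundamental_theorem_of_calculus_interior_strong[OF S])
    using Hder Hcont by (auto simp: has_real_derivative_iff_has_vector_derivative[symmetric]
        intro: continuous_on_subset)
  have lim1: "(\<lambda>k. LBINT t=ereal (- (real k + 1))..ereal (real k + 1). W t) \<longlonglongrightarrow> (LBINT t=-\<infinity>..\<infinity>. W t)"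
  proof (rule interval_integral_Icc_approx_integrable)
    show "einterval (-\<infinity>) \<infinity> = (\<Union>i. {- (real i + 1) .. real i + 1})"
    proof -
      have "x \<in> (\<Union>i. {- (real i + 1) .. real i + 1})" for x :: real
      proof -
        obtain n :: nat where "\<bar>x\<bar> \<le> real n" using real_arch_simple by blast
        then show ?thesis by (intro UN_I[of n]) auto
      qed
      then show ?thesis by (auto simp: einterval_def)
    qed
    show "incseq (\<lambda>i. real i + 1)" by (auto simp: incseq_def)
    show "decseq (\<lambda>i. - (real i + 1))" by (auto simp: decseq_def)
    show "(\<lambda>i. ereal (- (real i + 1))) \<longlonglongrightarrow> -\<infinity>"
      unfolding tendsto_MInfty eventually_sequentially
    proof
      fix r :: real
      obtain n :: nat where "- r < real n" using reals_Archimedean2 by blast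
      then show "\<exists>N. \<forall>i\<ge>N. ereal (- (real i + 1)) < ereal r" by (intro exI[of _ n]) auto
    qed
    show "(\<lambda>i. ereal (real i + 1)) \<longlonglongrightarrow> \<infinity>"
      unfolding tendsto_PInfty eventually_sequentially
    proof
      fix r :: real
      obtain n :: nat where "r < real n" using reals_Archimedean2 by blast
      then show "\<exists>N. \<forall>i\<ge>N. ereal r < ereal (real i + 1)" by (intro exI[of _ n]) auto
    qed
    show "set_integrable lborel (einterval (- \<infinity>) \<infinity>) W"
      using intW by (simp add: set_integrable_def)
  qed auto
  have eqk: "(LBINT t=ereal (- (real k + 1))..ereal (real k + 1). W t) = H (real k + 1) - H (- (real k + 1))" for k :: nat
  proof -
    have si: "set_integrable lborel {- (real k + 1) .. real k + 1} W"
      unfolding set_integrable_def using intW by (intro integrable_mult_indicator) auto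
    have "(LBINT t=ereal (- (real k + 1))..ereal (real k + 1). W t) = (LBINT t:{- (real k + 1) .. real k + 1}. W t)"
      by (rule interval_integral_Icc) simp
    also have "\<dots> = integral {- (real k + 1) .. real k + 1} W"
      by (rule set_borel_integral_eq_integral(2)[OF si])
    also have "\<dots> = H (real k + 1) - H (- (real k + 1))"
      using FTC[of k] by (rule integral_unique)
    finally show ?thesis .
  qed
  define c where "c = 1 / sqrt (2 * pi * \<sigma>\<^sup>2)"
  have Hb: "norm (H x) \<le> \<sigma>\<^sup>2 * c * (exp (- (x - m)\<^sup>2 / (2 * \<sigma>\<^sup>2)) * (A + B * \<bar>x\<bar>))" for x
  proof -
    have "\<bar>H x\<bar> = \<sigma>\<^sup>2 * ?\<phi> x * \<bar>f x\<bar>" unfolding H_def using phinn[of x] by (simp add: abs_mult)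
    also have "\<dots> \<le> \<sigma>\<^sup>2 * ?\<phi> x * (A + B * \<bar>x\<bar>)"
      by (intro mult_left_mono gr) (use phinn[of x] in simp)
    also have "\<dots> = \<sigma>\<^sup>2 * c * (exp (- (x - m)\<^sup>2 / (2 * \<sigma>\<^sup>2)) * (A + B * \<bar>x\<bar>))"
      by (simp add: normal_density_def c_def)
    finally show ?thesis by simp
  qed
  have limH1: "(\<lambda>k. H (real k + 1)) \<longlonglongrightarrow> 0"
  proof (rule Lim_null_comparison)
    show "\<forall>\<^sub>F k in sequentially. norm (H (real k + 1)) \<le> \<sigma>\<^sup>2 * c * (exp (- ((real k + 1) - m)\<^sup>2 / (2 * \<sigma>\<^sup>2)) * (A + B * (real k + 1)))"
      using Hb[of "real k + 1" for k] by (intro always_eventually allI) (metis abs_of_nonneg of_nat_0_le_iff add_nonneg_nonneg zero_le_one)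
    show "(\<lambda>k. \<sigma>\<^sup>2 * c * (exp (- ((real k + 1) - m)\<^sup>2 / (2 * \<sigma>\<^sup>2)) * (A + B * (real k + 1)))) \<longlonglongrightarrow> 0"
      using \<sigma> by real_asymp
  qed
  have limH2: "(\<lambda>k. H (- (real k + 1))) \<longlonglongrightarrow> 0"
  proof (rule Lim_null_comparison)
    show "\<forall>\<^sub>F k in sequentially. norm (H (- (real k + 1))) \<le> \<sigma>\<^sup>2 * c * (exp (- (- (real k + 1) - m)\<^sup>2 / (2 * \<sigma>\<^sup>2)) * (A + B * (real k + 1)))"
    proof (intro always_eventually allI)
      fix k :: nat
      have "\<bar>- (real k + 1)\<bar> = real k + 1" by simp
      then show "norm (H (- (real k + 1))) \<le> \<sigma>\<^sup>2 * c * (exp (- (- (real k + 1) - m)\<^sup>2 / (2 * \<sigma>\<^sup>2)) * (A + B * (real k + 1)))"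
        using Hb[of "- (real k + 1)"] by (simp add: add.commute)
    qed
    show "(\<lambda>k. \<sigma>\<^sup>2 * c * (exp (- (- (real k + 1) - m)\<^sup>2 / (2 * \<sigma>\<^sup>2)) * (A + B * (real k + 1)))) \<longlonglongrightarrow> 0"
      using \<sigma> by real_asymp
  qed
  have limH: "(\<lambda>k. H (real k + 1) - H (- (real k + 1))) \<longlonglongrightarrow> 0"
    using tendsto_diff[OF limH1 limH2] by simp
  have "(LBINT t=-\<infinity>..\<infinity>. W t) = 0"
    using LIMSEQ_unique[OF lim1] limH eqk by simp
  then have "(\<integral>t. W t \<partial>lborel) = 0"
    by (simp add: interval_lebesgue_integral_def einterval_def set_lebesgue_integral_def)
  then show "(\<integral>t. ?\<phi> t * ((t - m) * f t) \<partial>lborel) = \<sigma>\<^sup>2 * (\<integral>t. ?\<phi> t * f' t \<partial>lborel)"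
    unfolding W_def using int1 int2 by simp
qed

lemma stein_prod:
  fixes \<mu> :: "'n::finite \<Rightarrow> real" and h D :: "('n \<Rightarrow> real) \<Rightarrow> real" and i :: 'n
  assumes \<sigma>: "0 < \<sigma>"
  defines "P \<equiv> PiM UNIV (\<lambda>k. density lborel (normal_density (\<mu> k) \<sigma>))"
  assumes hm: "h \<in> borel_measurable P" and Dm: "D \<in> borel_measurable P"
    and Db: "\<And>f. \<bar>D f\<bar> \<le> K"
    and intF: "integrable P (\<lambda>f. (f i - \<mu> i) * h f)"
    and hc: "\<And>x. continuous_on UNIV (\<lambda>t. h (x(i := t)))"
    and hd: "\<And>x. \<exists>S. finite S \<and> (\<forall>t. t \<notin> S \<longrightarrow> ((\<lambda>t. h (x(i := t))) has_real_derivative D (x(i := t))) (at t))"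
    and hg: "\<And>x. \<exists>A B. \<forall>t. \<bar>h (x(i := t))\<bar> \<le> A + B * \<bar>t\<bar>"
  shows "integrable P D" "(\<integral>f. (f i - \<mu> i) * h f \<partial>P) = \<sigma>\<^sup>2 * (\<integral>f. D f \<partial>P)"
proof -
  let ?N = "\<lambda>k. density lborel (normal_density (\<mu> k) \<sigma>)"
  interpret PP: product_prob_space ?N "UNIV :: 'n set"
    unfolding product_prob_space_def product_prob_space_axioms_def product_sigma_finite_def
    using prob_space_normal_density[OF \<sigma>] prob_space_imp_sigma_finite by blast
  interpret Pr: prob_space P unfolding P_def by (rule PP.prob_space_P) auto
  show intD: "integrable P D"
    using Db by (intro Pr.integrable_const_bound[where B=K] AE_I2) (auto simp: Dm)
  have U: "(UNIV :: 'n set) = insert i (UNIV - {i})" by auto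
  have PU: "P = PiM (insert i (UNIV - {i})) ?N" unfolding P_def by (subst U[symmetric]) (rule refl)
  have fin: "finite (UNIV - {i})" "i \<notin> UNIV - {i}" by auto
  have inner: "(\<integral>t. (t - \<mu> i) * h (x(i := t)) \<partial>?N i) = \<sigma>\<^sup>2 * (\<integral>t. D (x(i := t)) \<partial>?N i)"
    if x: "x \<in> space (PiM (UNIV - {i}) ?N)" for x
  proof -
    have upd: "(\<lambda>t. x(i := t)) \<in> measurable (?N i) P"
      unfolding PU using measurable_component_update[OF x fin(2)] .
    have hm': "(\<lambda>t. h (x(i := t))) \<in> borel_measurable borel"
      using measurable_comp[OF upd hm] by (simp add: comp_def)
    have Dm': "(\<lambda>t. D (x(i := t))) \<in> borel_measurable borel"
      using measurable_comp[OF upd Dm] by (simp add: comp_def)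
    obtain S where S: "finite S" "\<And>t. t \<notin> S \<Longrightarrow> ((\<lambda>t. h (x(i := t))) has_real_derivative D (x(i := t))) (at t)"
      using hd[of x] by blast
    obtain A B where AB: "\<And>t. \<bar>h (x(i := t))\<bar> \<le> A + B * \<bar>t\<bar>" using hg[of x] by blast
    note st = stein1d[OF \<sigma> S(1) hc[of x] S(2) Dm' Db AB, of "\<mu> i"]
    have m1: "(\<lambda>t. (t - \<mu> i) * h (x(i := t))) \<in> borel_measurable borel" using hm' by measurable
    have "(\<integral>t. (t - \<mu> i) * h (x(i := t)) \<partial>?N i) = (\<integral>t. normal_density (\<mu> i) \<sigma> t * ((t - \<mu> i) * h (x(i := t))) \<partial>lborel)"
      by (subst integral_density) (auto simp: normal_density_nonneg intro!: m1)
    also have "\<dots> = \<sigma>\<^sup>2 * (\<integral>t. normal_density (\<mu> i) \<sigma> t * D (x(i := t)) \<partial>lborel)"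
      by (rule st(3))
    also have "(\<integral>t. normal_density (\<mu> i) \<sigma> t * D (x(i := t)) \<partial>lborel) = (\<integral>t. D (x(i := t)) \<partial>?N i)"
      by (subst integral_density) (auto simp: normal_density_nonneg intro!: Dm')
    finally show ?thesis .
  qed
  have "(\<integral>f. (f i - \<mu> i) * h f \<partial>P) = (\<integral>x. (\<integral>t. ((x(i := t)) i - \<mu> i) * h (x(i := t)) \<partial>?N i) \<partial>PiM (UNIV - {i}) ?N)"
    unfolding PU by (rule PP.product_integral_insert[OF fin]) (use intF PU in simp)
  also have "\<dots> = (\<integral>x. \<sigma>\<^sup>2 * (\<integral>t. D (x(i := t)) \<partial>?N i) \<partial>PiM (UNIV - {i}) ?N)"
  proof (rule Bochner_Integration.integral_cong[OF refl])
    fix x assume "x \<in> space (PiM (UNIV - {i}) ?N)"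
    then show "(\<integral>t. ((x(i := t)) i - \<mu> i) * h (x(i := t)) \<partial>?N i) = \<sigma>\<^sup>2 * (\<integral>t. D (x(i := t)) \<partial>?N i)"
      using inner by simp
  qed
  also have "\<dots> = \<sigma>\<^sup>2 * (\<integral>x. (\<integral>t. D (x(i := t)) \<partial>?N i) \<partial>PiM (UNIV - {i}) ?N)"
    by simp
  also have "(\<integral>x. (\<integral>t. D (x(i := t)) \<partial>?N i) \<partial>PiM (UNIV - {i}) ?N) = (\<integral>f. D f \<partial>P)"
    unfolding PU by (rule PP.product_integral_insert[OF fin, symmetric]) (use intD PU in simp)
  finally show "(\<integral>f. (f i - \<mu> i) * h f \<partial>P) = \<sigma>\<^sup>2 * (\<integral>f. D f \<partial>P)" .
qed
lemma measurable_vec_lambda_lborel[measurable]: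
  "(vec_lambda :: ('n::finite \<Rightarrow> real) \<Rightarrow> real^'n) \<in> borel_measurable (PiM UNIV (\<lambda>_. lborel))"
proof (subst borel_measurable_euclidean_space, intro ballI)
  fix b :: "real^'n" assume "b \<in> Basis"
  then obtain i where b: "b = axis i 1" by (auto simp: Basis_vec_def)
  have "(\<lambda>x. x i) \<in> borel_measurable (PiM UNIV (\<lambda>_. lborel :: real measure))" by measurable
  then show "(\<lambda>x. vec_lambda x \<bullet> b) \<in> borel_measurable (PiM UNIV (\<lambda>_. lborel))"
    unfolding b by (simp add: inner_axis)
qed
lemma lborel_vec_eq:
  "(lborel :: (real^'n::finite) measure) = distr (PiM UNIV (\<lambda>_. lborel)) borel vec_lambda"
proof (rule lborel_eqI)
  fix l u :: "real^'n"
  assume lu: "\<And>b. b \<in> Basis \<Longrightarrow> l \<bullet> b \<le> u \<bullet> b"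
  have ax: "axis i (1::real) \<in> Basis" for i :: 'n by (auto simp: Basis_vec_def)
  have lu': "l $ i \<le> u $ i" for i using lu[OF ax[of i]] by (simp add: inner_axis)
  have meas: "vec_lambda \<in> measurable (PiM UNIV (\<lambda>_. lborel)) (borel :: (real^'n) measure)"
    by measurable
  have pre: "vec_lambda -` box l u \<inter> space (PiM UNIV (\<lambda>_. lborel)) = PiE UNIV (\<lambda>i. {l $ i <..< u $ i})"
    by (auto simp: mem_box_cart space_PiM PiE_def extensional_def Pi_iff)
  have "emeasure (distr (PiM UNIV (\<lambda>_. lborel)) borel vec_lambda) (box l u)
     = emeasure (PiM UNIV (\<lambda>_. lborel)) (PiE UNIV (\<lambda>i. {l $ i <..< u $ i}))"
    by (subst emeasure_distr[OF meas]) (auto simp: pre)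
  also have "\<dots> = (\<Prod>i\<in>UNIV. emeasure lborel {l $ i <..< u $ i})"
    by (rule product_sigma_finite.emeasure_PiM) (auto simp: product_sigma_finite_def intro: lborel.sigma_finite_measure_axioms)
  also have "\<dots> = (\<Prod>i\<in>UNIV. ennreal (u $ i - l $ i))"
    using lu' by simp
  also have "\<dots> = ennreal (\<Prod>i\<in>UNIV. u $ i - l $ i)"
    using lu' by (simp add: prod_ennreal)
  also have "(\<Prod>i\<in>UNIV. u $ i - l $ i) = (\<Prod>b\<in>Basis. (u - l) \<bullet> b)"
  proof -
    have B: "(Basis :: (real^'n) set) = range (\<lambda>i. axis i 1)"
      by (auto simp: Basis_vec_def)
    have "(\<Prod>b\<in>Basis. (u - l) \<bullet> b) = (\<Prod>i\<in>UNIV. (u - l) \<bullet> axis i 1)"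
      unfolding B by (subst prod.reindex) (auto simp: inj_on_def axis_eq_axis)
    then show ?thesis by (simp add: inner_axis)
  qed
  finally show "emeasure (distr (PiM UNIV (\<lambda>_. lborel)) borel vec_lambda) (box l u) = (\<Prod>b\<in>Basis. (u - l) \<bullet> b)" .
qed simp

lemma density_PiM_normal:
  assumes \<sigma>: "0 < \<sigma>"
  shows "density (PiM UNIV (\<lambda>_. lborel)) (\<lambda>f. ennreal (\<Prod>i\<in>UNIV. normal_density (\<mu> i) \<sigma> (f i)))
     = PiM (UNIV :: 'n::finite set) (\<lambda>i. density lborel (normal_density (\<mu> i) \<sigma>))"
proof -
  interpret P: product_prob_space "\<lambda>i. density lborel (normal_density (\<mu> i) \<sigma>)" "UNIV :: 'n set"
    unfolding product_prob_space_def product_prob_space_axioms_def product_sigma_finite_def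
    using prob_space_normal_density[OF \<sigma>] prob_space_imp_sigma_finite by blast
  interpret L: product_sigma_finite "\<lambda>_::'n. lborel :: real measure"
    by (auto simp: product_sigma_finite_def intro: lborel.sigma_finite_measure_axioms)
  show ?thesis
  proof (rule P.PiM_eqI)
    show "sets (density (PiM UNIV (\<lambda>_. lborel)) (\<lambda>f. ennreal (\<Prod>i\<in>UNIV. normal_density (\<mu> i) \<sigma> (f i))))
        = sets (PiM UNIV (\<lambda>i. density lborel (normal_density (\<mu> i) \<sigma>)))"
      by (simp only: sets_density) (intro sets_PiM_cong; simp)
    fix A :: "'n \<Rightarrow> real set"
    assume A: "\<And>i. i \<in> UNIV \<Longrightarrow> A i \<in> sets (density lborel (normal_density (\<mu> i) \<sigma>))"
    then have A': "A i \<in> sets borel" for i by simp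
    have "emeasure (density (PiM UNIV (\<lambda>_. lborel)) (\<lambda>f. ennreal (\<Prod>i\<in>UNIV. normal_density (\<mu> i) \<sigma> (f i)))) (PiE UNIV A)
       = (\<integral>\<^sup>+ f. ennreal (\<Prod>i\<in>UNIV. normal_density (\<mu> i) \<sigma> (f i)) * indicator (PiE UNIV A) f \<partial>PiM UNIV (\<lambda>_. lborel))"
      by (rule emeasure_density) (use A' in \<open>auto intro!: sets_PiM_I_finite\<close>)
    also have "\<dots> = (\<integral>\<^sup>+ f. (\<Prod>i\<in>UNIV. ennreal (normal_density (\<mu> i) \<sigma> (f i)) * indicator (A i) (f i)) \<partial>PiM UNIV (\<lambda>_. lborel))"
      by (intro nn_integral_cong)
        (auto simp: prod_ennreal normal_density_nonneg indicator_def prod.distrib PiE_def Pi_iff extensional_def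
           split: if_splits)
    also have "\<dots> = (\<Prod>i\<in>UNIV. (\<integral>\<^sup>+ t. ennreal (normal_density (\<mu> i) \<sigma> t) * indicator (A i) t \<partial>lborel))"
      by (rule L.product_nn_integral_prod) (use A' in auto)
    also have "\<dots> = (\<Prod>i\<in>UNIV. emeasure (density lborel (normal_density (\<mu> i) \<sigma>)) (A i))"
      by (intro prod.cong refl, subst emeasure_density) (use A' in auto)
    finally show "emeasure (density (PiM UNIV (\<lambda>_. lborel)) (\<lambda>f. ennreal (\<Prod>i\<in>UNIV. normal_density (\<mu> i) \<sigma> (f i)))) (PiE UNIV A)
       = (\<Prod>i\<in>UNIV. emeasure (density lborel (normal_density (\<mu> i) \<sigma>)) (A i))" .
  qed simp
qed

definition NP :: "real^'n::finite \<Rightarrow> real \<Rightarrow> ('n \<Rightarrow> real) measure" where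
  "NP \<mu> \<sigma> = PiM UNIV (\<lambda>i. density lborel (normal_density (\<mu> $ i) \<sigma>))"

lemma gauss_vec_eq:
  assumes \<sigma>: "0 < \<sigma>"
  shows "gauss_vec \<mu> \<sigma> = distr (NP \<mu> \<sigma>) borel vec_lambda"
proof -
  have "gauss_vec \<mu> \<sigma> = density (distr (PiM UNIV (\<lambda>_. lborel)) borel vec_lambda)
      (\<lambda>y. ennreal (\<Prod>i\<in>UNIV. normal_density (\<mu> $ i) \<sigma> (y $ i)))"
    unfolding gauss_vec_def by (subst lborel_vec_eq) simp
  also have "\<dots> = distr (density (PiM UNIV (\<lambda>_. lborel))
      (\<lambda>f. ennreal (\<Prod>i\<in>UNIV. normal_density (\<mu> $ i) \<sigma> (f i)))) borel vec_lambda"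
    by (subst density_distr) auto
  also have "\<dots> = distr (NP \<mu> \<sigma>) borel vec_lambda"
    unfolding NP_def by (subst density_PiM_normal[OF \<sigma>]) simp
  finally show ?thesis .
qed


definition cf :: "real \<Rightarrow> real \<Rightarrow> real" where
  "cf \<gamma> q = (if \<gamma> < q then 1 - \<gamma> / q else 0)"

lemma cs_sum: "(\<Sum>j\<in>J. z j * b j) \<le> sqrt (\<Sum>j\<in>J. (z j)\<^sup>2) * sqrt (\<Sum>j\<in>J. (b j)\<^sup>2)"
proof -
  have "(\<Sum>j\<in>J. z j * b j) \<le> (\<Sum>j\<in>J. \<bar>z j\<bar> * \<bar>b j\<bar>)"
    by (intro sum_mono) (simp add: abs_mult[symmetric])
  also have "\<dots> \<le> L2_set z J * L2_set b J" by (rule L2_set_mult_ineq)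
  finally show ?thesis by (simp add: L2_set_def)
qed

lemma group_ineq:
  fixes z b :: "'a \<Rightarrow> real" and J :: "'a set"
  assumes \<gamma>: "0 < \<gamma>"
  defines "S \<equiv> (\<Sum>j\<in>J. (z j)\<^sup>2)"
  defines "bs \<equiv> (\<lambda>j. cf \<gamma> S * z j)"
  shows "(\<Sum>j\<in>J. (1/2 * (b j)\<^sup>2 - z j * b j)) + \<gamma> * (1 / sqrt S) * sqrt (\<Sum>j\<in>J. (b j)\<^sup>2)
    \<ge> (\<Sum>j\<in>J. (1/2 * (bs j)\<^sup>2 - z j * bs j)) + \<gamma> * (1 / sqrt S) * sqrt (\<Sum>j\<in>J. (bs j)\<^sup>2)
      + 1/2 * (\<Sum>j\<in>J. (b j - bs j)\<^sup>2)"
proof -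
  let ?B = "sqrt (\<Sum>j\<in>J. (b j)\<^sup>2)"
  let ?Z = "(\<Sum>j\<in>J. z j * b j)"
  have S0: "0 \<le> S" unfolding S_def by (intro sum_nonneg) simp
  have cs: "?Z \<le> sqrt S * ?B" unfolding S_def by (rule cs_sum)
  have B0: "0 \<le> ?B" by (simp add: sum_nonneg)
  show ?thesis
  proof (cases "\<gamma> < S")
    case True
    define c where "c = 1 - \<gamma> / S"
    have Spos: "0 < S" using True \<gamma> by simp
    have c0: "0 < c" using True Spos by (simp add: c_def field_simps)
    have bs: "bs j = c * z j" for j unfolding bs_def cf_def c_def using True by simp
    have nb: "sqrt (\<Sum>j\<in>J. (bs j)\<^sup>2) = c * sqrt S"
    proof -
      have "(\<Sum>j\<in>J. (bs j)\<^sup>2) = c\<^sup>2 * S" unfolding bs S_def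
        by (simp add: power_mult_distrib sum_distrib_left)
      then show ?thesis using c0 by (simp add: real_sqrt_mult)
    qed
    have e1: "(\<Sum>j\<in>J. (1/2 * (b j)\<^sup>2 - z j * b j)) - (\<Sum>j\<in>J. (1/2 * (bs j)\<^sup>2 - z j * bs j))
       - 1/2 * (\<Sum>j\<in>J. (b j - bs j)\<^sup>2) = - (1 - c) * ?Z + c * (1 - c) * S"
    proof -
      have "(\<Sum>j\<in>J. (1/2 * (b j)\<^sup>2 - z j * b j)) - (\<Sum>j\<in>J. (1/2 * (bs j)\<^sup>2 - z j * bs j))
       - 1/2 * (\<Sum>j\<in>J. (b j - bs j)\<^sup>2)
        = (\<Sum>j\<in>J. (1/2 * (b j)\<^sup>2 - z j * b j) - (1/2 * (bs j)\<^sup>2 - z j * bs j) - 1/2 * (b j - bs j)\<^sup>2)"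
        by (simp add: sum_subtractf sum_distrib_left)
      also have "\<dots> = (\<Sum>j\<in>J. - (1 - c) * (z j * b j) + c * (1 - c) * (z j)\<^sup>2)"
        by (intro sum.cong refl) (simp add: bs power2_eq_square algebra_simps)
      also have "\<dots> = - (1 - c) * ?Z + c * (1 - c) * S"
        unfolding S_def by (simp add: sum.distrib sum_distrib_left)
      finally show ?thesis .
    qed
    have g: "\<gamma> = (1 - c) * S" using Spos by (simp add: c_def)
    have sS: "sqrt S * sqrt S = S" using S0 by simp
    have spos: "0 < sqrt S" using Spos by simp
    have "\<gamma> * (1 / sqrt S) * ?B - \<gamma> * (1 / sqrt S) * (c * sqrt S) - (1 - c) * ?Z + c * (1 - c) * S
        = (\<gamma> / sqrt S) * (?B - ?Z / sqrt S)"
      using spos sS unfolding g by (simp add: field_simps)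
    also have "\<dots> \<ge> 0"
    proof -
      have "?Z / sqrt S \<le> ?B" using cs spos by (simp add: field_simps mult.commute)
      then show ?thesis using \<gamma> spos by simp
    qed
    finally have "0 \<le> \<gamma> * (1 / sqrt S) * ?B - \<gamma> * (1 / sqrt S) * (c * sqrt S) - (1 - c) * ?Z + c * (1 - c) * S" .
    moreover have "\<gamma> * (1 / sqrt S) * sqrt (\<Sum>j\<in>J. (bs j)\<^sup>2) = \<gamma> * (1 / sqrt S) * (c * sqrt S)"
      using nb by simp
    ultimately show ?thesis using e1 by linarith
  next
    case False
    have bs: "bs j = 0" for j unfolding bs_def cf_def using False by simp
    have lam: "sqrt S \<le> \<gamma> * (1 / sqrt S)"
    proof (cases "S = 0")
      case True then show ?thesis by simp
    next
      case False
      then have "0 < sqrt S" using S0 by simp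
      moreover have "sqrt S * sqrt S \<le> \<gamma>" using S0 \<open>\<not> \<gamma> < S\<close> by simp
      ultimately show ?thesis by (simp add: field_simps)
    qed
    have "- ?Z + \<gamma> * (1 / sqrt S) * ?B \<ge> 0"
      using cs mult_right_mono[OF lam B0] by linarith
    moreover have "(\<Sum>j\<in>J. (1/2 * (b j)\<^sup>2 - z j * b j)) = 1/2 * (\<Sum>j\<in>J. (b j)\<^sup>2) - ?Z"
      by (simp add: sum_subtractf sum_distrib_left)
    moreover have "(\<Sum>j\<in>J. (b j - bs j)\<^sup>2) = (\<Sum>j\<in>J. (b j)\<^sup>2)"
      "(\<Sum>j\<in>J. (1/2 * (bs j)\<^sup>2 - z j * bs j)) = 0" "\<gamma> * (1 / sqrt S) * sqrt (\<Sum>j\<in>J. (bs j)\<^sup>2) = 0"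
      by (simp_all add: bs)
    ultimately show ?thesis by linarith
  qed
qed

definition zz :: "real^'p^'n \<Rightarrow> real^'n \<Rightarrow> real^'p" where
  "zz X y = transpose X *v y"

definition Sg :: "real^'p^'n \<Rightarrow> ('p::finite \<Rightarrow> 'g) \<Rightarrow> real^'n \<Rightarrow> 'g \<Rightarrow> real" where
  "Sg X grp y g = (\<Sum>j\<in>{j. grp j = g}. (zz X y $ j)\<^sup>2)"

definition bstar :: "real^'p^'n \<Rightarrow> ('p::finite \<Rightarrow> 'g) \<Rightarrow> real \<Rightarrow> real^'n \<Rightarrow> real^'p" where
  "bstar X grp \<gamma> y = (\<chi> j. cf \<gamma> (Sg X grp y (grp j)) * zz X y $ j)"

lemma inner_mat_vec: "y \<bullet> (X *v b) = (transpose X *v y) \<bullet> (b :: real^'p::finite)"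
  for X :: "real^'p^'n::finite"
  by (simp add: inner_vec_def matrix_vector_mult_def transpose_def sum_distrib_left
      sum_distrib_right mult_ac sum.swap[where A = "UNIV :: 'n set"])

lemma norm_sq_expand:
  fixes X :: "real^'p::finite^'n::finite"
  assumes XX: "transpose X ** X = mat 1"
  shows "(norm (y - X *v b))\<^sup>2 = y \<bullet> y - 2 * (zz X y \<bullet> b) + b \<bullet> b"
proof -
  have "(X *v b) \<bullet> (X *v b) = b \<bullet> b"
    by (simp add: inner_mat_vec matrix_vector_mul_assoc XX)
  then show ?thesis
    by (simp add: power2_norm_eq_inner inner_diff_left inner_diff_right inner_mat_vec zz_def inner_commute)
qed

lemma sum_by_group:
  fixes h :: "'p::finite \<Rightarrow> real" and grp :: "'p \<Rightarrow> 'g::finite"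
  shows "(\<Sum>j\<in>UNIV. h j) = (\<Sum>g\<in>UNIV. \<Sum>j\<in>{j. grp j = g}. h j)"
  using sum.group[of "UNIV :: 'p set" "UNIV :: 'g set" grp h] by simp

lemma obj_expand:
  fixes X :: "real^'p::finite^'n::finite" and grp :: "'p \<Rightarrow> 'g::finite"
  assumes XX: "transpose X ** X = mat 1"
  shows "agl_obj X grp \<gamma> y b = 1/2 * (y \<bullet> y) + (\<Sum>g\<in>UNIV.
     (\<Sum>j\<in>{j. grp j = g}. (1/2 * (b $ j)\<^sup>2 - zz X y $ j * b $ j))
     + \<gamma> * (1 / sqrt (Sg X grp y g)) * sqrt (\<Sum>j\<in>{j. grp j = g}. (b $ j)\<^sup>2))"
proof -
  have "(norm (y - X *v b))\<^sup>2 = y \<bullet> y + 2 * (\<Sum>j\<in>UNIV. (1/2 * (b $ j)\<^sup>2 - zz X y $ j * b $ j))"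
    unfolding norm_sq_expand[OF XX]
    by (simp add: inner_vec_def sum_subtractf sum_distrib_left power2_eq_square)
  also have "(\<Sum>j\<in>UNIV. (1/2 * (b $ j)\<^sup>2 - zz X y $ j * b $ j))
      = (\<Sum>g\<in>UNIV. \<Sum>j\<in>{j. grp j = g}. (1/2 * (b $ j)\<^sup>2 - zz X y $ j * b $ j))"
    by (rule sum_by_group)
  finally show ?thesis
    unfolding agl_obj_def agl_weight_def gnorm_def Sg_def betaLS_def zz_def
    by (simp add: sum.distrib sum_distrib_left algebra_simps)
qed

lemma agl_beta_eq:
  fixes X :: "real^'p::finite^'n::finite" and grp :: "'p \<Rightarrow> 'g::finite"
  assumes XX: "transpose X ** X = mat 1" and \<gamma>: "0 < \<gamma>"
  shows "agl_beta X grp \<gamma> y = bstar X grp \<gamma> y"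
proof -
  let ?bs = "bstar X grp \<gamma> y"
  have key: "agl_obj X grp \<gamma> y b \<ge> agl_obj X grp \<gamma> y ?bs + 1/2 * (\<Sum>j\<in>UNIV. (b $ j - ?bs $ j)\<^sup>2)" for b
  proof -
    have "(\<Sum>j\<in>UNIV. (b $ j - ?bs $ j)\<^sup>2) = (\<Sum>g\<in>UNIV. \<Sum>j\<in>{j. grp j = g}. (b $ j - ?bs $ j)\<^sup>2)"
      by (rule sum_by_group)
    moreover have "(\<Sum>j\<in>{j. grp j = g}. (1/2 * (b $ j)\<^sup>2 - zz X y $ j * b $ j))
     + \<gamma> * (1 / sqrt (Sg X grp y g)) * sqrt (\<Sum>j\<in>{j. grp j = g}. (b $ j)\<^sup>2)
     \<ge> (\<Sum>j\<in>{j. grp j = g}. (1/2 * (?bs $ j)\<^sup>2 - zz X y $ j * ?bs $ j))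
     + \<gamma> * (1 / sqrt (Sg X grp y g)) * sqrt (\<Sum>j\<in>{j. grp j = g}. (?bs $ j)\<^sup>2)
     + 1/2 * (\<Sum>j\<in>{j. grp j = g}. (b $ j - ?bs $ j)\<^sup>2)" for g
    proof -
      have bsj: "\<And>j. j \<in> {j. grp j = g} \<Longrightarrow> ?bs $ j = cf \<gamma> (\<Sum>j\<in>{j. grp j = g}. (zz X y $ j)\<^sup>2) * zz X y $ j"
        by (simp add: bstar_def Sg_def)
      have "(\<Sum>j\<in>{j. grp j = g}. (1/2 * (?bs $ j)\<^sup>2 - zz X y $ j * ?bs $ j)) =
        (\<Sum>j\<in>{j. grp j = g}. (1/2 * (cf \<gamma> (\<Sum>j\<in>{j. grp j = g}. (zz X y $ j)\<^sup>2) * zz X y $ j)\<^sup>2 - zz X y $ j * (cf \<gamma> (\<Sum>j\<in>{j. grp j = g}. (zz X y $ j)\<^sup>2) * zz X y $ j)))"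
        "(\<Sum>j\<in>{j. grp j = g}. (?bs $ j)\<^sup>2) = (\<Sum>j\<in>{j. grp j = g}. (cf \<gamma> (\<Sum>j\<in>{j. grp j = g}. (zz X y $ j)\<^sup>2) * zz X y $ j)\<^sup>2)"
        "(\<Sum>j\<in>{j. grp j = g}. (b $ j - ?bs $ j)\<^sup>2) = (\<Sum>j\<in>{j. grp j = g}. (b $ j - cf \<gamma> (\<Sum>j\<in>{j. grp j = g}. (zz X y $ j)\<^sup>2) * zz X y $ j)\<^sup>2)"
        by (auto intro!: sum.cong simp: bsj)
      then show ?thesis
        using group_ineq[OF \<gamma>, of "\<lambda>j. zz X y $ j" "{j. grp j = g}" "\<lambda>j. b $ j"]
        unfolding Sg_def by simp
    qed
    then have "(\<Sum>g\<in>UNIV. (\<Sum>j\<in>{j. grp j = g}. (1/2 * (b $ j)\<^sup>2 - zz X y $ j * b $ j))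
     + \<gamma> * (1 / sqrt (Sg X grp y g)) * sqrt (\<Sum>j\<in>{j. grp j = g}. (b $ j)\<^sup>2))
     \<ge> (\<Sum>g\<in>UNIV. (\<Sum>j\<in>{j. grp j = g}. (1/2 * (?bs $ j)\<^sup>2 - zz X y $ j * ?bs $ j))
     + \<gamma> * (1 / sqrt (Sg X grp y g)) * sqrt (\<Sum>j\<in>{j. grp j = g}. (?bs $ j)\<^sup>2)
     + 1/2 * (\<Sum>j\<in>{j. grp j = g}. (b $ j - ?bs $ j)\<^sup>2))"
      by (intro sum_mono) auto
    ultimately show ?thesis
      unfolding obj_expand[OF XX] by (simp add: sum.distrib sum_distrib_left)
  qed
  show ?thesis
    unfolding agl_beta_def
  proof (rule the_equality)
    show "\<forall>b'. agl_obj X grp \<gamma> y ?bs \<le> agl_obj X grp \<gamma> y b'"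
    proof
      fix b'
      have "0 \<le> 1/2 * (\<Sum>j\<in>UNIV. (b' $ j - ?bs $ j)\<^sup>2)" by (simp add: sum_nonneg)
      then show "agl_obj X grp \<gamma> y ?bs \<le> agl_obj X grp \<gamma> y b'" using key[of b'] by linarith
    qed
    fix b
    assume "\<forall>b'. agl_obj X grp \<gamma> y b \<le> agl_obj X grp \<gamma> y b'"
    then have "agl_obj X grp \<gamma> y b \<le> agl_obj X grp \<gamma> y ?bs" by blast
    with key[of b] have "(\<Sum>j\<in>UNIV. (b $ j - ?bs $ j)\<^sup>2) \<le> 0" by linarith
    then have "(\<Sum>j\<in>UNIV. (b $ j - ?bs $ j)\<^sup>2) = 0" by (simp add: sum_nonneg antisym)
    then have "\<forall>j\<in>UNIV. (b $ j - ?bs $ j)\<^sup>2 = 0" by (subst sum_nonneg_eq_0_iff[symmetric]) auto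
    then show "b = ?bs" by (simp add: vec_eq_iff)
  qed
qed
lemma matrix_add_rdistrib': "(A + B) ** C = A ** C + B ** (C :: real^'k::finite^'m::finite)"
  for A B :: "real^'m^'n::finite"
  by (simp add: matrix_matrix_mult_def vec_eq_iff sum.distrib algebra_simps)

lemma matrix_scaleR_right: "A ** (k *\<^sub>R B) = k *\<^sub>R (A ** (B :: real^'k::finite^'m::finite))"
  for A :: "real^'m^'n::finite"
  by (simp add: matrix_matrix_mult_def vec_eq_iff sum_distrib_left algebra_simps)

lemma matrix_inv_eqI:
  fixes A B :: "real^'n::finite^'n"
  assumes "A ** B = mat 1"
  shows "matrix_inv A = B"
proof -
  have BA: "B ** A = mat 1" using assms matrix_left_right_inverse by blast
  have ex: "\<exists>A'. A ** A' = mat 1 \<and> A' ** A = mat 1" using assms BA by blast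
  define A' where "A' = matrix_inv A"
  have "A ** A' = mat 1 \<and> A' ** A = mat 1" unfolding A'_def matrix_inv_def by (rule someI_ex[OF ex])
  then have "A' = A' ** (A ** B)" by (simp add: assms)
  also have "\<dots> = (A' ** A) ** B" by (simp add: matrix_mul_assoc)
  also have "\<dots> = B" using \<open>A ** A' = mat 1 \<and> A' ** A = mat 1\<close> by simp
  finally show ?thesis unfolding A'_def .
qed

lemma trace_scaleR: "trace (c *\<^sub>R A) = c * trace (A :: real^'n::finite^'n)"
  by (simp add: trace_def sum_distrib_left)

lemma inv_lemma:
  fixes Y :: "real^'p::finite^'n::finite" and P N Dm :: "real^'p^'p"
  assumes YY: "transpose Y ** Y = Dm" and PD: "P ** Dm = P"
    and key: "N + \<gamma> *\<^sub>R P + \<gamma> *\<^sub>R (P ** N) = 0"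
  shows "(mat 1 + \<gamma> *\<^sub>R (Y ** P ** transpose Y)) ** (mat 1 + Y ** N ** transpose Y) = mat 1"
proof -
  have YPD: "Y ** P ** Dm ** K = Y ** P ** K" for K :: "real^'p^'p"
    by (metis PD matrix_mul_assoc)
  have "(mat 1 + \<gamma> *\<^sub>R (Y ** P ** transpose Y)) ** (mat 1 + Y ** N ** transpose Y)
    = mat 1 + Y ** N ** transpose Y + \<gamma> *\<^sub>R (Y ** P ** transpose Y)
      + \<gamma> *\<^sub>R (Y ** P ** (transpose Y ** Y) ** N ** transpose Y)"
    by (simp add: matrix_add_ldistrib matrix_add_rdistrib' matrix_scaleR_right
        scalar_matrix_assoc[symmetric] matrix_mul_assoc add.assoc)
  also have "\<dots> = mat 1 + Y ** (N + \<gamma> *\<^sub>R P + \<gamma> *\<^sub>R (P ** N)) ** transpose Y"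
    using YPD by (simp add: YY PD scaleR_add_right matrix_add_ldistrib matrix_add_rdistrib' matrix_scaleR_right
        scalar_matrix_assoc[symmetric] matrix_mul_assoc add.assoc)
  also have "\<dots> = mat 1" by (simp add: key)
  finally show ?thesis .
qed

lemma trace_lemma:
  fixes Y :: "real^'p::finite^'n::finite" and N Phi Dm :: "real^'p^'p"
  assumes YY: "transpose Y ** Y = Dm"
  shows "trace ((mat 1 + Y ** N ** transpose Y) ** (Y ** transpose Y + \<gamma> *\<^sub>R (Y ** Phi ** transpose Y)))
    = trace Dm + \<gamma> * trace (Phi ** Dm) + trace (N ** Dm ** Dm) + \<gamma> * trace (N ** Dm ** Phi ** Dm)"
proof -
  have tr: "trace (Y ** K ** transpose Y) = trace (K ** Dm)" for K :: "real^'p^'p"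
    by (metis YY matrix_mul_assoc trace_mul_sym)
  have tr1: "trace (Y ** transpose Y) = trace Dm"
    using tr[of "mat 1"] by simp
  have "(mat 1 + Y ** N ** transpose Y) ** (Y ** transpose Y + \<gamma> *\<^sub>R (Y ** Phi ** transpose Y))
     = Y ** transpose Y + \<gamma> *\<^sub>R (Y ** Phi ** transpose Y) + Y ** (N ** Dm) ** transpose Y
       + \<gamma> *\<^sub>R (Y ** (N ** Dm ** Phi) ** transpose Y)"
    by (simp add: matrix_add_ldistrib matrix_add_rdistrib' matrix_scaleR_right
        scalar_matrix_assoc[symmetric] matrix_mul_assoc add.assoc YY[symmetric] scaleR_add_right)
  then show ?thesis
    by (simp only: trace_add trace_scaleR tr tr1)
qed


definition blk :: "('p::finite \<Rightarrow> 'g) \<Rightarrow> ('g \<Rightarrow> bool) \<Rightarrow> ('p \<Rightarrow> 'p \<Rightarrow> real) \<Rightarrow> real^'p^'p" where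
  "blk grp act f = (\<chi> j k. if grp j = grp k \<and> act (grp j) then f j k else 0)"

lemma blk_mult: "blk grp act f ** blk grp act h
   = blk grp act (\<lambda>j k. \<Sum>l\<in>{l. grp l = grp j}. f j l * h l k)"
proof -
  have "(blk grp act f ** blk grp act h) $ j $ k = blk grp act (\<lambda>j k. \<Sum>l\<in>{l. grp l = grp j}. f j l * h l k) $ j $ k" for j k
  proof -
    have "(blk grp act f ** blk grp act h) $ j $ k
      = (\<Sum>l\<in>UNIV. if grp l = grp j then (if grp j = grp k \<and> act (grp j) then f j l * h l k else 0) else 0)"
      by (auto simp: blk_def matrix_matrix_mult_def intro!: sum.cong)
    also have "\<dots> = (\<Sum>l\<in>{l \<in> UNIV. grp l = grp j}. (if grp j = grp k \<and> act (grp j) then f j l * h l k else 0))"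
      by (rule sum.inter_filter[symmetric]) simp
    also have "\<dots> = blk grp act (\<lambda>j k. \<Sum>l\<in>{l. grp l = grp j}. f j l * h l k) $ j $ k"
    proof (cases "grp j = grp k \<and> act (grp j)")
      case True then show ?thesis by (simp add: blk_def)
    next
      case False
      have "(\<Sum>l\<in>{l \<in> UNIV. grp l = grp j}. (if grp j = grp k \<and> act (grp j) then f j l * h l k else 0)) = 0"
        by (rule sum.neutral) (intro ballI if_not_P[OF False])
      moreover have "blk grp act (\<lambda>j k. \<Sum>l\<in>{l. grp l = grp j}. f j l * h l k) $ j $ k = 0"
        unfolding blk_def vec_lambda_beta by (rule if_not_P[OF False])
      ultimately show ?thesis by simp
    qed
    finally show ?thesis .
  qed
  then show ?thesis by (simp add: vec_eq_iff)
qed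

lemma blk_add: "blk grp act f + blk grp act h = blk grp act (\<lambda>j k. f j k + h j k)"
  by (auto simp: blk_def vec_eq_iff)

lemma blk_scaleR: "c *\<^sub>R blk grp act f = blk grp act (\<lambda>j k. c * f j k)"
  by (auto simp: blk_def vec_eq_iff)

lemma blk_cong: "(\<And>j k. grp j = grp k \<Longrightarrow> act (grp j) \<Longrightarrow> f j k = h j k) \<Longrightarrow> blk grp act f = blk grp act h"
  by (auto simp: blk_def vec_eq_iff)

lemma blk_zero: "blk grp act (\<lambda>_ _. 0) = 0"
  by (auto simp: blk_def vec_eq_iff)

lemma trace_blk: "trace (blk grp act f) = (\<Sum>j\<in>UNIV. if act (grp j) then f j j else 0)"
  by (simp add: blk_def trace_def)

lemma deltaL: "j \<in> J \<Longrightarrow> finite J \<Longrightarrow> (\<Sum>l\<in>J. (if j = l then 1 else 0) * h l) = (h j :: real)"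
proof -
  assume "j \<in> J" "finite J"
  have "(\<Sum>l\<in>J. (if j = l then 1 else 0) * h l) = (\<Sum>l\<in>J. if j = l then h l else 0)"
    by (intro sum.cong) auto
  then show ?thesis using \<open>j \<in> J\<close> \<open>finite J\<close> by simp
qed

lemma deltaR: "k \<in> J \<Longrightarrow> finite J \<Longrightarrow> (\<Sum>l\<in>J. h l * (if l = k then 1 else 0)) = (h k :: real)"
proof -
  assume "k \<in> J" "finite J"
  have "(\<Sum>l\<in>J. h l * (if l = k then 1 else 0)) = (\<Sum>l\<in>J. if l = k then h l else 0)"
    by (intro sum.cong) auto
  then show ?thesis using \<open>k \<in> J\<close> \<open>finite J\<close> by simp
qed

lemma blk_delta_right: "blk grp act f ** blk grp act (\<lambda>j k. if j = k then 1 else 0) = blk grp act f"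
  unfolding blk_mult by (rule blk_cong) (simp add: deltaR)


lemma dfhat_eq:
  fixes X :: "real^'p::finite^'n::finite" and grp :: "'p \<Rightarrow> 'g::finite"
  assumes XX: "transpose X ** X = mat 1" and \<gamma>: "0 < \<gamma>"
  shows "dfhat X grp \<gamma> y = (\<Sum>j\<in>UNIV. if \<gamma> < Sg X grp y (grp j)
     then 1 - \<gamma> / Sg X grp y (grp j) + 2 * \<gamma> * (zz X y $ j)\<^sup>2 / (Sg X grp y (grp j))\<^sup>2 else 0)"
proof -
  define z where "z = zz X y"
  define S where "S = Sg X grp y"
  define act where "act = (\<lambda>g. \<gamma> < S g)"
  define u where "u = (\<lambda>j. z $ j / sqrt (S (grp j)))"
  define \<delta> where "\<delta> = (\<lambda>j k::'p. if j = k then 1 else (0::real))"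
  define bh where "bh = agl_beta X grp \<gamma> y"
  have S_def': "S g = (\<Sum>j\<in>{j. grp j = g}. (z $ j)\<^sup>2)" for g by (simp add: S_def Sg_def z_def)
  have S0: "0 \<le> S g" for g unfolding S_def' by (simp add: sum_nonneg)
  have Spos: "0 < S g" if "act g" for g using that \<gamma> unfolding act_def by simp
  have bh_eq: "bh $ j = cf \<gamma> (S (grp j)) * z $ j" for j
    unfolding bh_def agl_beta_eq[OF XX \<gamma>] by (simp add: bstar_def S_def z_def)
  have cf_act: "cf \<gamma> (S g) = 1 - \<gamma> / S g" if "act g" for g using that unfolding act_def cf_def by simp
  have cf_nact: "cf \<gamma> (S g) = 0" if "\<not> act g" for g using that unfolding act_def cf_def by simp
  have cfpos: "0 < cf \<gamma> (S g)" if "act g" for g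
    using that Spos[OF that] unfolding cf_act[OF that] act_def by (simp add: field_simps)
  have cf0: "0 \<le> cf \<gamma> (S g)" for g using cfpos cf_nact by (cases "act g") (auto intro: less_imp_le)
  have gn_bh: "gnorm grp bh g = cf \<gamma> (S g) * sqrt (S g)" for g
  proof -
    have "(\<Sum>j\<in>{j. grp j = g}. (bh $ j)\<^sup>2) = (cf \<gamma> (S g))\<^sup>2 * (\<Sum>j\<in>{j. grp j = g}. (z $ j)\<^sup>2)"
      unfolding sum_distrib_left by (intro sum.cong) (auto simp: bh_eq power_mult_distrib)
    also have "\<dots> = (cf \<gamma> (S g))\<^sup>2 * S g" by (simp add: S_def')
    finally have "(\<Sum>j\<in>{j. grp j = g}. (bh $ j)\<^sup>2) = (cf \<gamma> (S g))\<^sup>2 * S g" .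
    then show ?thesis using cf0[of g] by (simp add: gnorm_def real_sqrt_mult)
  qed
  have gn_ls: "gnorm grp (betaLS X y) g = sqrt (S g)" for g
    by (simp add: gnorm_def betaLS_def S_def' z_def zz_def)
  have active: "agl_active X grp \<gamma> y = {g. act g}"
  proof -
    have "gnorm grp bh g \<noteq> 0 \<longleftrightarrow> act g" for g
      using cfpos[of g] Spos[of g] cf_nact[of g] by (cases "act g") (auto simp: gn_bh)
    then show ?thesis unfolding agl_active_def bh_def by blast
  qed
  have usum: "(\<Sum>l\<in>{l. grp l = grp j}. (u l)\<^sup>2) = 1" if "act (grp j)" for j
  proof -
    have "(\<Sum>l\<in>{l. grp l = grp j}. (u l)\<^sup>2) = (\<Sum>l\<in>{l. grp l = grp j}. (z $ l)\<^sup>2 / S (grp j))"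
      using S0 by (intro sum.cong) (auto simp: u_def power_divide)
    also have "\<dots> = (\<Sum>l\<in>{l. grp l = grp j}. (z $ l)\<^sup>2) / S (grp j)" by (simp add: sum_divide_distrib)
    also have "\<dots> = S (grp j) / S (grp j)" by (simp only: S_def'[symmetric])
    also have "\<dots> = 1" using Spos[OF that] by simp
    finally show ?thesis .
  qed
  define Y where "Y = XA X grp \<gamma> y"
  have YY: "transpose Y ** Y = blk grp act \<delta>"
  proof -
    have "(transpose Y ** Y) $ j $ k = blk grp act \<delta> $ j $ k" for j k
    proof -
      have "(transpose Y ** Y) $ j $ k = (if act (grp j) \<and> act (grp k) then (transpose X ** X) $ j $ k else 0)"
        by (cases "act (grp j)"; cases "act (grp k)") (simp_all add: Y_def XA_def active matrix_matrix_mult_def transpose_def)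
      also have "\<dots> = blk grp act \<delta> $ j $ k"
        by (simp add: XX blk_def \<delta>_def mat_def)
      finally show ?thesis .
    qed
    then show ?thesis by (simp add: vec_eq_iff)
  qed
  have Pi_eq: "PiA X grp \<gamma> y = blk grp act (\<lambda>j k. (\<delta> j k - u j * u k) / (S (grp j) - \<gamma>))"
  proof -
    have "PiA X grp \<gamma> y $ j $ k = blk grp act (\<lambda>j k. (\<delta> j k - u j * u k) / (S (grp j) - \<gamma>)) $ j $ k" for j k
    proof (cases "grp j = grp k \<and> act (grp j)")
      case True
      then have gk: "grp k = grp j" and aj: "act (grp j)" by auto
      define s where "s = sqrt (S (grp j))"
      define c where "c = cf \<gamma> (S (grp j))"
      have s0: "0 < s" using Spos[OF aj] unfolding s_def by simp
      have ss: "S (grp j) = s\<^sup>2" using S0 unfolding s_def by simp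
      have c0: "0 < c" using cfpos[OF aj] unfolding c_def by simp
      have cS: "S (grp j) - \<gamma> = c * s\<^sup>2"
      proof -
        have "c = 1 - \<gamma> / S (grp j)" unfolding c_def by (rule cf_act[OF aj])
        then have "c * S (grp j) = S (grp j) - \<gamma>" using Spos[OF aj] by (simp add: field_simps)
        then show ?thesis using ss by simp
      qed
      have "PiA X grp \<gamma> y $ j $ k = 1 / s * (\<delta> j k / (c * s) - (c * z $ j) * (c * z $ k) / (c * s) ^ 3)"
        unfolding PiA_def Let_def bh_def[symmetric] agl_weight_def gn_ls gn_bh \<delta>_def
        by (simp add: bh_eq active s_def c_def gk aj)
      also have "\<dots> = (\<delta> j k - u j * u k) / (S (grp j) - \<gamma>)"
        unfolding cS using s0 c0 by (simp add: u_def gk s_def[symmetric] field_simps power2_eq_square power3_eq_cube)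
      finally show ?thesis by (simp add: blk_def gk aj)
    next
      case False
      then show ?thesis by (auto simp: PiA_def Let_def blk_def active)
    qed
    then show ?thesis by (simp add: vec_eq_iff)
  qed
  have Phi_eq: "PhiA X grp \<gamma> y = blk grp act (\<lambda>j k. u j * u k / S (grp j))"
  proof -
    have "PhiA X grp \<gamma> y $ j $ k = blk grp act (\<lambda>j k. u j * u k / S (grp j)) $ j $ k" for j k
    proof (cases "grp j = grp k \<and> act (grp j)")
      case True
      then have gk: "grp k = grp j" and aj: "act (grp j)" by auto
      define s where "s = sqrt (S (grp j))"
      define c where "c = cf \<gamma> (S (grp j))"
      have s0: "0 < s" using Spos[OF aj] unfolding s_def by simp
      have ss: "S (grp j) = s\<^sup>2" using S0 unfolding s_def by simp
      have c0: "0 < c" using cfpos[OF aj] unfolding c_def by simp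
      have "PhiA X grp \<gamma> y $ j $ k = (c * z $ j / (c * s)) * (z $ k / s ^ 3)"
        unfolding PhiA_def Let_def bh_def[symmetric] gn_ls gn_bh
        by (simp add: bh_eq active s_def c_def betaLS_def z_def zz_def gk aj)
      also have "\<dots> = u j * u k / S (grp j)"
        unfolding ss using s0 c0 by (simp add: u_def gk s_def[symmetric] field_simps power2_eq_square power3_eq_cube)
      finally show ?thesis by (simp add: blk_def gk aj)
    next
      case False
      then show ?thesis by (auto simp: PhiA_def Let_def blk_def active)
    qed
    then show ?thesis by (simp add: vec_eq_iff)
  qed
  define P where "P = PiA X grp \<gamma> y"
  define \<Phi> where "\<Phi> = PhiA X grp \<gamma> y"
  define N where "N = blk grp act (\<lambda>j k. \<gamma> / S (grp j) * (u j * u k - \<delta> j k))"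
  define Dm where "Dm = blk grp act \<delta>"
  have PD: "P ** Dm = P" unfolding P_def Pi_eq Dm_def \<delta>_def by (rule blk_delta_right)
  have ND: "N ** Dm = N" unfolding N_def Dm_def \<delta>_def by (rule blk_delta_right)
  have \<Phi>D: "\<Phi> ** Dm = \<Phi>" unfolding \<Phi>_def Phi_eq Dm_def \<delta>_def by (rule blk_delta_right)
  have dsum: "(\<Sum>l\<in>{l. grp l = grp j}. (\<delta> j l - u j * u l) * (u l * u k - \<delta> l k)) = u j * u k - \<delta> j k"
    if gk: "grp j = grp k" and aj: "act (grp j)" for j k
  proof -
    let ?J = "{l. grp l = grp j}"
    have jJ: "j \<in> ?J" and kJ: "k \<in> ?J" using gk by auto
    have "(\<Sum>l\<in>?J. (\<delta> j l - u j * u l) * (u l * u k - \<delta> l k))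
      = (\<Sum>l\<in>?J. \<delta> j l * (u l * u k)) - (\<Sum>l\<in>?J. \<delta> j l * \<delta> l k)
        - u j * u k * (\<Sum>l\<in>?J. (u l)\<^sup>2) + u j * (\<Sum>l\<in>?J. u l * \<delta> l k)"
      by (simp add: algebra_simps sum.distrib sum_subtractf sum_distrib_left power2_eq_square)
    also have "\<dots> = u j * u k - \<delta> j k - u j * u k + u j * u k"
      unfolding usum[OF aj] \<delta>_def
      using deltaL[OF jJ, of "\<lambda>l. u l * u k"] deltaL[OF jJ, of "\<lambda>l. if l = k then 1 else 0"]
        deltaR[OF kJ, of u] by simp
    finally show ?thesis by simp
  qed
  have key: "N + \<gamma> *\<^sub>R P + \<gamma> *\<^sub>R (P ** N) = 0"
  proof -
    have "N + \<gamma> *\<^sub>R P + \<gamma> *\<^sub>R (P ** N) = blk grp act (\<lambda>j k. \<gamma> / S (grp j) * (u j * u k - \<delta> j k)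
       + \<gamma> * ((\<delta> j k - u j * u k) / (S (grp j) - \<gamma>))
       + \<gamma> * (\<Sum>l\<in>{l. grp l = grp j}. (\<delta> j l - u j * u l) / (S (grp j) - \<gamma>) * (\<gamma> / S (grp l) * (u l * u k - \<delta> l k))))"
      unfolding N_def P_def Pi_eq blk_mult blk_scaleR blk_add ..
    also have "\<dots> = blk grp act (\<lambda>_ _. 0)"
    proof (rule blk_cong)
      fix j k assume gk: "grp j = grp k" and aj: "act (grp j)"
      let ?S = "S (grp j)"
      have Sp: "0 < ?S" using Spos[OF aj] .
      have Sg: "\<gamma> < ?S" using aj unfolding act_def .
      have "(\<Sum>l\<in>{l. grp l = grp j}. (\<delta> j l - u j * u l) / (?S - \<gamma>) * (\<gamma> / S (grp l) * (u l * u k - \<delta> l k)))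
         = (\<Sum>l\<in>{l. grp l = grp j}. \<gamma> / (?S * (?S - \<gamma>)) * ((\<delta> j l - u j * u l) * (u l * u k - \<delta> l k)))"
        by (intro sum.cong refl) (simp add: field_simps)
      also have "\<dots> = \<gamma> / (?S * (?S - \<gamma>)) * (u j * u k - \<delta> j k)"
        unfolding sum_distrib_left[symmetric] dsum[OF gk aj] ..
      finally have e: "(\<Sum>l\<in>{l. grp l = grp j}. (\<delta> j l - u j * u l) / (?S - \<gamma>) * (\<gamma> / S (grp l) * (u l * u k - \<delta> l k)))
         = \<gamma> / (?S * (?S - \<gamma>)) * (u j * u k - \<delta> j k)" .
      show "\<gamma> / ?S * (u j * u k - \<delta> j k)
       + \<gamma> * ((\<delta> j k - u j * u k) / (?S - \<gamma>))
       + \<gamma> * (\<Sum>l\<in>{l. grp l = grp j}. (\<delta> j l - u j * u l) / (?S - \<gamma>) * (\<gamma> / S (grp l) * (u l * u k - \<delta> l k))) = 0"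
        unfolding e using Sp Sg by (simp add: field_simps)
    qed
    also have "\<dots> = 0" by (rule blk_zero)
    finally show ?thesis .
  qed
  have inv: "matrix_inv (mat 1 + \<gamma> *\<^sub>R (Y ** P ** transpose Y)) = mat 1 + Y ** N ** transpose Y"
    by (rule matrix_inv_eqI) (rule inv_lemma[OF YY[folded Dm_def] PD key])
  have "dfhat X grp \<gamma> y = trace ((mat 1 + Y ** N ** transpose Y) ** (Y ** transpose Y + \<gamma> *\<^sub>R (Y ** \<Phi> ** transpose Y)))"
    unfolding dfhat_def Let_def Y_def[symmetric] P_def[symmetric] \<Phi>_def[symmetric] inv ..
  also have "\<dots> = trace Dm + \<gamma> * trace (\<Phi> ** Dm) + trace (N ** Dm ** Dm) + \<gamma> * trace (N ** Dm ** \<Phi> ** Dm)"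
    by (rule trace_lemma[OF YY[folded Dm_def]])
  also have "\<dots> = trace Dm + \<gamma> * trace \<Phi> + trace N + \<gamma> * trace (N ** \<Phi>)"
  proof -
    have "N ** \<Phi> ** Dm = N ** \<Phi>" by (metis \<Phi>D matrix_mul_assoc)
    then show ?thesis by (simp add: ND \<Phi>D)
  qed
  also have "trace (N ** \<Phi>) = 0"
  proof -
    have "trace (N ** \<Phi>) = (\<Sum>j\<in>UNIV. if act (grp j) then
        (\<Sum>l\<in>{l. grp l = grp j}. \<gamma> / S (grp j) * (u j * u l - \<delta> j l) * (u l * u j / S (grp l))) else 0)"
      unfolding N_def \<Phi>_def Phi_eq blk_mult trace_blk ..
    also have "\<dots> = 0"
    proof (rule sum.neutral, intro ballI)
      fix j :: 'p
      show "(if act (grp j) then (\<Sum>l\<in>{l. grp l = grp j}. \<gamma> / S (grp j) * (u j * u l - \<delta> j l) * (u l * u j / S (grp l))) else 0) = 0"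
      proof (cases "act (grp j)")
        case True
        have jJ: "j \<in> {l. grp l = grp j}" by simp
        have "(\<Sum>l\<in>{l. grp l = grp j}. \<gamma> / S (grp j) * (u j * u l - \<delta> j l) * (u l * u j / S (grp l)))
          = (\<Sum>l\<in>{l. grp l = grp j}. \<gamma> / (S (grp j))\<^sup>2 * ((u j)\<^sup>2 * (u l)\<^sup>2 - (\<delta> j l * (u l * u j))))"
          by (intro sum.cong refl) (simp add: field_simps power2_eq_square)
        also have "\<dots> = \<gamma> / (S (grp j))\<^sup>2 * ((u j)\<^sup>2 * (\<Sum>l\<in>{l. grp l = grp j}. (u l)\<^sup>2) - (\<Sum>l\<in>{l. grp l = grp j}. \<delta> j l * (u l * u j)))"
          by (simp only: sum_distrib_left sum_subtractf right_diff_distrib)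
        also have "\<dots> = 0"
          unfolding usum[OF True] \<delta>_def using deltaL[OF jJ, of "\<lambda>l. u l * u j"] by (simp add: power2_eq_square)
        finally show ?thesis using True by simp
      qed simp
    qed
    finally show ?thesis .
  qed
  also have "trace Dm + \<gamma> * trace \<Phi> + trace N + \<gamma> * 0
     = (\<Sum>j\<in>UNIV. if act (grp j) then 1 + \<gamma> * (u j * u j / S (grp j)) + \<gamma> / S (grp j) * (u j * u j - 1) else 0)"
    unfolding Dm_def \<Phi>_def Phi_eq N_def trace_blk \<delta>_def
    by (simp add: sum_distrib_left sum.distrib[symmetric] if_distrib[of "\<lambda>x. \<gamma> * x"] cong: if_cong)
      (intro sum.cong refl, auto)
  also have "\<dots> = (\<Sum>j\<in>UNIV. if \<gamma> < Sg X grp y (grp j)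
     then 1 - \<gamma> / Sg X grp y (grp j) + 2 * \<gamma> * (zz X y $ j)\<^sup>2 / (Sg X grp y (grp j))\<^sup>2 else 0)"
  proof (intro sum.cong refl)
    fix j :: 'p
    show "(if act (grp j) then 1 + \<gamma> * (u j * u j / S (grp j)) + \<gamma> / S (grp j) * (u j * u j - 1) else 0)
      = (if \<gamma> < Sg X grp y (grp j) then 1 - \<gamma> / Sg X grp y (grp j) + 2 * \<gamma> * (zz X y $ j)\<^sup>2 / (Sg X grp y (grp j))\<^sup>2 else 0)"
    proof (cases "act (grp j)")
      case True
      have uu: "u j * u j = (z $ j)\<^sup>2 / S (grp j)" using S0[of "grp j"]
        by (simp add: u_def power2_eq_square)
      show ?thesis using True Spos[OF True] unfolding uu
        by (simp add: act_def S_def[symmetric] z_def[symmetric] field_simps power2_eq_square)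
    next
      case False then show ?thesis by (simp add: act_def S_def)
    qed
  qed
  finally show ?thesis .
qed

lemma quad_finite:
  fixes a b c :: real assumes "a \<noteq> 0"
  shows "finite {t. a * t\<^sup>2 + b * t + c = 0}"
proof -
  have "{t. a * t\<^sup>2 + b * t + c = 0} \<subseteq> {(-b + sqrt (discrim a b c)) / (2 * a), (-b - sqrt (discrim a b c)) / (2 * a)}"
    using discriminant_iff[OF assms] by auto
  then show ?thesis by (rule finite_subset) simp
qed

lemma cf_comp_deriv:
  assumes \<gamma>: "0 < \<gamma>" and q: "\<And>s. (q has_real_derivative q' s) (at s)" and ne: "q t \<noteq> \<gamma>"
  shows "((\<lambda>s. cf \<gamma> (q s)) has_real_derivative (if \<gamma> < q t then \<gamma> * q' t / (q t)\<^sup>2 else 0)) (at t)"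
proof -
  have qc: "continuous_on UNIV q" by (rule DERIV_continuous_on) (rule q)
  show ?thesis
  proof (cases "\<gamma> < q t")
    case True
    have "((\<lambda>s. 1 - \<gamma> / q s) has_real_derivative \<gamma> * q' t / (q t)\<^sup>2) (at t)"
      using True \<gamma> by (auto intro!: derivative_eq_intros q simp: power2_eq_square field_simps)
    then have "((\<lambda>s. cf \<gamma> (q s)) has_real_derivative \<gamma> * q' t / (q t)\<^sup>2) (at t)"
    proof (rule has_field_derivative_transform_within_open)
      show "open {s. (\<lambda>_. \<gamma>) s < q s}" by (rule open_Collect_less) (auto intro: qc)
    qed (use True in \<open>auto simp: cf_def\<close>)
    then show ?thesis using True by simp
  next
    case False
    then have lt: "q t < \<gamma>" using ne by simp
    have "((\<lambda>s. 0) has_real_derivative 0) (at t)" by simp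
    then have "((\<lambda>s. cf \<gamma> (q s)) has_real_derivative 0) (at t)"
    proof (rule has_field_derivative_transform_within_open)
      show "open {s. q s < (\<lambda>_. \<gamma>) s}" by (rule open_Collect_less) (auto intro: qc)
    qed (use lt in \<open>auto simp: cf_def\<close>)
    then show ?thesis using False by simp
  qed
qed

lemma zz_line:
  fixes X :: "real^'p::finite^'n::finite"
  shows "zz X (y0 + t *\<^sub>R axis i 1) $ j = zz X y0 $ j + t * X $ i $ j"
  by (simp add: zz_def matrix_vector_right_distrib matrix_vector_mult_scaleR matrix_vector_mult_basis
      column_def transpose_def)

lemma cf_line_deriv:
  fixes X :: "real^'p::finite^'n::finite" and grp :: "'p \<Rightarrow> 'g::finite"
  assumes \<gamma>: "0 < \<gamma>"
  shows "\<exists>E. finite E \<and> (\<forall>t. t \<notin> E \<longrightarrow>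
    ((\<lambda>t. cf \<gamma> (Sg X grp (y0 + t *\<^sub>R axis i 1) g)) has_real_derivative
      (if \<gamma> < Sg X grp (y0 + t *\<^sub>R axis i 1) g
       then \<gamma> * (2 * (\<Sum>k\<in>{k. grp k = g}. X $ i $ k * zz X (y0 + t *\<^sub>R axis i 1) $ k))
            / (Sg X grp (y0 + t *\<^sub>R axis i 1) g)\<^sup>2 else 0)) (at t))"
proof -
  let ?J = "{k. grp k = g}"
  define a where "a k = zz X y0 $ k" for k
  define x where "x k = X $ i $ k" for k
  define q where "q t = (\<Sum>k\<in>?J. (a k + t * x k)\<^sup>2)" for t
  define q' where "q' t = 2 * (\<Sum>k\<in>?J. x k * (a k + t * x k))" for t
  have qS: "Sg X grp (y0 + t *\<^sub>R axis i 1) g = q t" for t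
    by (simp add: Sg_def zz_line q_def a_def x_def)
  have q'S: "2 * (\<Sum>k\<in>?J. X $ i $ k * zz X (y0 + t *\<^sub>R axis i 1) $ k) = q' t" for t
    by (simp add: zz_line q'_def a_def x_def)
  have qd: "(q has_real_derivative q' s) (at s)" for s
    unfolding q_def q'_def
    by (auto intro!: derivative_eq_intros simp: sum_distrib_left algebra_simps)
  show ?thesis
  proof (cases "\<forall>k\<in>?J. x k = 0")
    case True
    have qc: "q t = q 0" for t unfolding q_def using True by simp
    have q'0: "q' t = 0" for t unfolding q'_def using True by simp
    show ?thesis
    proof (intro exI[of _ "{}"] conjI allI impI)
      fix t :: real
      have e: "(\<lambda>t. cf \<gamma> (q t)) = (\<lambda>_. cf \<gamma> (q 0))" by (rule ext, subst qc, rule refl)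
      have "((\<lambda>t. cf \<gamma> (q t)) has_real_derivative 0) (at t)"
        unfolding e by (rule DERIV_const)
      then show "((\<lambda>t. cf \<gamma> (Sg X grp (y0 + t *\<^sub>R axis i 1) g)) has_real_derivative
        (if \<gamma> < Sg X grp (y0 + t *\<^sub>R axis i 1) g
         then \<gamma> * (2 * (\<Sum>k\<in>{k. grp k = g}. X $ i $ k * zz X (y0 + t *\<^sub>R axis i 1) $ k))
            / (Sg X grp (y0 + t *\<^sub>R axis i 1) g)\<^sup>2 else 0)) (at t)"
        unfolding qS q'S q'0 by simp
    qed simp
  next
    case False
    define A where "A = (\<Sum>k\<in>?J. (x k)\<^sup>2)"
    define B where "B = 2 * (\<Sum>k\<in>?J. a k * x k)"
    define C where "C = (\<Sum>k\<in>?J. (a k)\<^sup>2)"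
    have qq: "q t = A * t\<^sup>2 + B * t + C" for t
      unfolding q_def A_def B_def C_def
      by (simp add: power2_sum sum.distrib sum_distrib_left sum_distrib_right algebra_simps power_mult_distrib)
    have "A \<noteq> 0"
    proof
      assume "A = 0"
      then have "\<forall>k\<in>?J. (x k)\<^sup>2 = 0" unfolding A_def by (subst sum_nonneg_eq_0_iff[symmetric]) auto
      then show False using False by simp
    qed
    have fin: "finite {t. q t = \<gamma>}"
    proof -
      have "{t. q t = \<gamma>} = {t. A * t\<^sup>2 + B * t + (C - \<gamma>) = 0}" by (auto simp: qq)
      then show ?thesis using quad_finite[OF \<open>A \<noteq> 0\<close>] by simp
    qed
    show ?thesis
    proof (intro exI[of _ "{t. q t = \<gamma>}"] conjI allI impI fin)
      fix t assume "t \<notin> {t. q t = \<gamma>}"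
      then have "q t \<noteq> \<gamma>" by simp
      from cf_comp_deriv[OF \<gamma> qd this]
      show "((\<lambda>t. cf \<gamma> (Sg X grp (y0 + t *\<^sub>R axis i 1) g)) has_real_derivative
        (if \<gamma> < Sg X grp (y0 + t *\<^sub>R axis i 1) g
         then \<gamma> * (2 * (\<Sum>k\<in>{k. grp k = g}. X $ i $ k * zz X (y0 + t *\<^sub>R axis i 1) $ k))
            / (Sg X grp (y0 + t *\<^sub>R axis i 1) g)\<^sup>2 else 0)) (at t)"
        unfolding qS q'S .
    qed
  qed
qed

definition hfun :: "real^'p^'n \<Rightarrow> ('p::finite \<Rightarrow> 'g) \<Rightarrow> real \<Rightarrow> 'n \<Rightarrow> real^'n \<Rightarrow> real" where
  "hfun X grp \<gamma> i y = (\<Sum>j\<in>UNIV. X $ i $ j * (cf \<gamma> (Sg X grp y (grp j)) * zz X y $ j))"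

definition Dfun :: "real^'p^'n \<Rightarrow> ('p::finite \<Rightarrow> 'g) \<Rightarrow> real \<Rightarrow> 'n \<Rightarrow> real^'n \<Rightarrow> real" where
  "Dfun X grp \<gamma> i y = (\<Sum>j\<in>UNIV. X $ i $ j * (X $ i $ j * cf \<gamma> (Sg X grp y (grp j))
     + zz X y $ j * (if \<gamma> < Sg X grp y (grp j)
        then \<gamma> * (2 * (\<Sum>k\<in>{k. grp k = grp j}. X $ i $ k * zz X y $ k)) / (Sg X grp y (grp j))\<^sup>2 else 0)))"

lemma h_line_deriv:
  fixes X :: "real^'p::finite^'n::finite" and grp :: "'p \<Rightarrow> 'g::finite"
  assumes \<gamma>: "0 < \<gamma>"
  shows "\<exists>E. finite E \<and> (\<forall>t. t \<notin> E \<longrightarrow>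
    ((\<lambda>t. hfun X grp \<gamma> i (y0 + t *\<^sub>R axis i 1)) has_real_derivative Dfun X grp \<gamma> i (y0 + t *\<^sub>R axis i 1)) (at t))"
proof -
  let ?y = "\<lambda>t. y0 + t *\<^sub>R axis i 1"
  let ?d = "\<lambda>g t. (if \<gamma> < Sg X grp (?y t) g
       then \<gamma> * (2 * (\<Sum>k\<in>{k. grp k = g}. X $ i $ k * zz X (?y t) $ k))
            / (Sg X grp (?y t) g)\<^sup>2 else 0)"
  have "\<forall>g. \<exists>E. finite E \<and> (\<forall>t. t \<notin> E \<longrightarrow>
    ((\<lambda>t. cf \<gamma> (Sg X grp (?y t) g)) has_real_derivative ?d g t) (at t))"
    using cf_line_deriv[OF \<gamma>] by blast
  from choice[OF this] obtain E where E0: "\<forall>g. finite (E g) \<and> (\<forall>t. t \<notin> E g \<longrightarrow>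
    ((\<lambda>t. cf \<gamma> (Sg X grp (?y t) g)) has_real_derivative ?d g t) (at t))"
    by blast
  have E: "\<And>g. finite (E g)"
    "\<And>g t. t \<notin> E g \<Longrightarrow> ((\<lambda>t. cf \<gamma> (Sg X grp (?y t) g)) has_real_derivative ?d g t) (at t)"
    using E0 by blast+
  show ?thesis
  proof (intro exI[of _ "\<Union>g. E g"] conjI allI impI)
    show "finite (\<Union>g. E g)" using E(1) by simp
    fix t assume t: "t \<notin> (\<Union>g. E g)"
    have zd: "((\<lambda>t. zz X (?y t) $ j) has_real_derivative X $ i $ j) (at t)" for j
      unfolding zz_line by (auto intro!: derivative_eq_intros)
    have "((\<lambda>t. hfun X grp \<gamma> i (?y t)) has_real_derivative
       (\<Sum>j\<in>UNIV. X $ i $ j * (?d (grp j) t * zz X (?y t) $ j + X $ i $ j * cf \<gamma> (Sg X grp (?y t) (grp j))))) (at t)"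
      unfolding hfun_def
    proof (rule DERIV_sum)
      fix j :: 'p
      have tj: "t \<notin> E (grp j)" using t by blast
      show "((\<lambda>t. X $ i $ j * (cf \<gamma> (Sg X grp (?y t) (grp j)) * zz X (?y t) $ j)) has_real_derivative
        X $ i $ j * (?d (grp j) t * zz X (?y t) $ j + X $ i $ j * cf \<gamma> (Sg X grp (?y t) (grp j)))) (at t)"
        by (rule DERIV_cmult, rule DERIV_mult[OF E(2)[OF tj] zd])
    qed
    moreover have "(\<Sum>j\<in>UNIV. X $ i $ j * (?d (grp j) t * zz X (?y t) $ j + X $ i $ j * cf \<gamma> (Sg X grp (?y t) (grp j))))
       = Dfun X grp \<gamma> i (?y t)"
      unfolding Dfun_def by (intro sum.cong refl) (simp add: algebra_simps)
    ultimately show "((\<lambda>t. hfun X grp \<gamma> i (?y t)) has_real_derivative Dfun X grp \<gamma> i (?y t)) (at t)"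
      by simp
  qed
qed

lemma cf_alt: "0 < \<gamma> \<Longrightarrow> cf \<gamma> q = 1 - \<gamma> / max \<gamma> q"
  by (auto simp: cf_def max_def)

lemma cf_bounds: "0 < \<gamma> \<Longrightarrow> 0 \<le> cf \<gamma> q \<and> cf \<gamma> q \<le> 1"
  by (auto simp: cf_def field_simps)

lemma continuous_zz: "continuous_on UNIV (\<lambda>y. zz X y $ j)"
  unfolding zz_def matrix_vector_mult_def by (auto intro!: continuous_intros)

lemma continuous_cf: "continuous_on A (\<lambda>x. cf \<gamma> (f x))" if g: "0 < \<gamma>" and "continuous_on A f"
proof -
  have nz: "max \<gamma> (f x) \<noteq> 0" for x using max.cobounded1[of \<gamma> "f x"] g by linarith
  have "continuous_on A (\<lambda>x. 1 - \<gamma> / max \<gamma> (f x))"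
    using nz by (intro continuous_intros that) auto
  then show ?thesis by (simp add: cf_alt[OF g])
qed

lemma continuous_hfun:
  assumes "0 < \<gamma>"
  shows "continuous_on UNIV (hfun X grp \<gamma> i)"
  unfolding hfun_def Sg_def using assms
  by (auto intro!: continuous_intros continuous_cf continuous_zz)


lemma colsum:
  fixes X :: "real^'p::finite^'n::finite"
  assumes XX: "transpose X ** X = mat 1"
  shows "(\<Sum>i\<in>UNIV. X $ i $ j * X $ i $ k) = (if j = k then 1 else 0)"
proof -
  have "(transpose X ** X) $ j $ k = (\<Sum>i\<in>UNIV. X $ i $ j * X $ i $ k)"
    by (simp add: matrix_matrix_mult_def transpose_def)
  then show ?thesis using XX by (simp add: mat_def)
qed

lemma X_entry_bound:
  fixes X :: "real^'p::finite^'n::finite"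
  assumes XX: "transpose X ** X = mat 1"
  shows "\<bar>X $ i $ j\<bar> \<le> 1"
proof -
  have "(X $ i $ j)\<^sup>2 \<le> (\<Sum>i\<in>UNIV. (X $ i $ j)\<^sup>2)"
    by (rule member_le_sum) auto
  also have "\<dots> = 1" using colsum[OF XX, of j j] by (simp add: power2_eq_square)
  finally show ?thesis by (simp add: abs_square_le_1)
qed

lemma z_bound:
  fixes X :: "real^'p::finite^'n::finite"
  assumes XX: "transpose X ** X = mat 1"
  shows "\<bar>zz X y $ j\<bar> \<le> (\<Sum>k\<in>UNIV. \<bar>y $ k\<bar>)"
proof -
  have "\<bar>zz X y $ j\<bar> = \<bar>\<Sum>k\<in>UNIV. X $ k $ j * y $ k\<bar>"
    by (simp add: zz_def matrix_vector_mult_def transpose_def)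
  also have "\<dots> \<le> (\<Sum>k\<in>UNIV. \<bar>X $ k $ j * y $ k\<bar>)" by (rule sum_abs)
  also have "\<dots> \<le> (\<Sum>k\<in>UNIV. \<bar>y $ k\<bar>)"
    by (intro sum_mono) (simp add: abs_mult mult_left_le_one_le X_entry_bound[OF XX])
  finally show ?thesis .
qed

lemma z_le_S: "\<bar>zz X y $ j\<bar> \<le> sqrt (Sg X grp y (grp j))"
proof -
  have "(zz X y $ j)\<^sup>2 \<le> Sg X grp y (grp j)"
    unfolding Sg_def by (rule member_le_sum) auto
  then show ?thesis by (metis real_sqrt_abs real_sqrt_le_mono)
qed

lemma hfun_bound:
  fixes X :: "real^'p::finite^'n::finite"
  assumes XX: "transpose X ** X = mat 1" and \<gamma>: "0 < \<gamma>"
  shows "\<bar>hfun X grp \<gamma> i y\<bar> \<le> real CARD('p) * (\<Sum>k\<in>UNIV. \<bar>y $ k\<bar>)"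
proof -
  have "\<bar>hfun X grp \<gamma> i y\<bar> \<le> (\<Sum>j\<in>UNIV. \<bar>X $ i $ j * (cf \<gamma> (Sg X grp y (grp j)) * zz X y $ j)\<bar>)"
    unfolding hfun_def by (rule sum_abs)
  also have "\<dots> \<le> (\<Sum>j\<in>(UNIV::'p set). (\<Sum>k\<in>UNIV. \<bar>y $ k\<bar>))"
  proof (intro sum_mono)
    fix j
    have "\<bar>X $ i $ j * (cf \<gamma> (Sg X grp y (grp j)) * zz X y $ j)\<bar> = \<bar>X $ i $ j\<bar> * (\<bar>cf \<gamma> (Sg X grp y (grp j))\<bar> * \<bar>zz X y $ j\<bar>)"
      by (simp add: abs_mult)
    also have "\<dots> \<le> 1 * (1 * (\<Sum>k\<in>UNIV. \<bar>y $ k\<bar>))"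
      using X_entry_bound[OF XX, of i j] cf_bounds[OF \<gamma>, of "Sg X grp y (grp j)"] z_bound[OF XX, of y j]
      by (intro mult_mono) auto
    finally show "\<bar>X $ i $ j * (cf \<gamma> (Sg X grp y (grp j)) * zz X y $ j)\<bar> \<le> (\<Sum>k\<in>UNIV. \<bar>y $ k\<bar>)" by simp
  qed
  also have "\<dots> = real CARD('p) * (\<Sum>k\<in>UNIV. \<bar>y $ k\<bar>)" by simp
  finally show ?thesis .
qed

lemma Dfun_bound:
  fixes X :: "real^'p::finite^'n::finite"
  assumes XX: "transpose X ** X = mat 1" and \<gamma>: "0 < \<gamma>"
  shows "\<bar>Dfun X grp \<gamma> i y\<bar> \<le> real CARD('p) * (1 + 2 * real CARD('p))"
proof -
  let ?S = "\<lambda>j. Sg X grp y (grp j)"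
  let ?d = "\<lambda>j. (if \<gamma> < ?S j then \<gamma> * (2 * (\<Sum>k\<in>{k. grp k = grp j}. X $ i $ k * zz X y $ k)) / (?S j)\<^sup>2 else 0)"
  have termb: "\<bar>X $ i $ j * (X $ i $ j * cf \<gamma> (?S j) + zz X y $ j * ?d j)\<bar> \<le> 1 + 2 * real CARD('p)" for j
  proof -
    have Xb: "\<bar>X $ i $ j\<bar> \<le> 1" by (rule X_entry_bound[OF XX])
    have zd: "\<bar>zz X y $ j * ?d j\<bar> \<le> 2 * real CARD('p)"
    proof (cases "\<gamma> < ?S j")
      case True
      define s where "s = sqrt (?S j)"
      have S0: "0 < ?S j" using True \<gamma> by simp
      have s0: "0 < s" using S0 unfolding s_def by simp
      have ss: "s * s = ?S j" using S0 unfolding s_def by simp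
      have zk: "\<bar>zz X y $ k\<bar> \<le> s" if "grp k = grp j" for k
        using z_le_S[of X y k grp] that unfolding s_def by simp
      have "\<bar>\<Sum>k\<in>{k. grp k = grp j}. X $ i $ k * zz X y $ k\<bar> \<le> (\<Sum>k\<in>{k. grp k = grp j}. \<bar>X $ i $ k * zz X y $ k\<bar>)"
        by (rule sum_abs)
      also have "\<dots> \<le> (\<Sum>k\<in>{k. grp k = grp j}. s)"
      proof (intro sum_mono)
        fix k assume "k \<in> {k. grp k = grp j}"
        then have "\<bar>X $ i $ k\<bar> * \<bar>zz X y $ k\<bar> \<le> 1 * s"
          using X_entry_bound[OF XX, of i k] zk[of k] by (intro mult_mono) auto
        then show "\<bar>X $ i $ k * zz X y $ k\<bar> \<le> s" by (simp add: abs_mult)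
      qed
      also have "\<dots> \<le> real CARD('p) * s"
        using s0 card_mono[of "UNIV :: 'p set" "{k. grp k = grp j}"] by (simp add: mult_right_mono)
      finally have sb: "\<bar>\<Sum>k\<in>{k. grp k = grp j}. X $ i $ k * zz X y $ k\<bar> \<le> real CARD('p) * s" .
      have "\<bar>zz X y $ j * ?d j\<bar> = \<bar>zz X y $ j\<bar> * (\<gamma> * (2 * \<bar>\<Sum>k\<in>{k. grp k = grp j}. X $ i $ k * zz X y $ k\<bar>) / (?S j)\<^sup>2)"
        using True \<gamma> by (simp add: abs_mult)
      also have "\<dots> \<le> s * (\<gamma> * (2 * (real CARD('p) * s)) / (?S j)\<^sup>2)"
        using zk[of j] sb \<gamma> by (intro mult_mono divide_right_mono mult_left_mono) auto
      also have "\<dots> = 2 * real CARD('p) * (\<gamma> / ?S j)"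
        using s0 S0 by (simp add: ss[symmetric] field_simps power2_eq_square)
      also have "\<dots> \<le> 2 * real CARD('p) * 1"
        using True \<gamma> by (intro mult_left_mono) auto
      finally show ?thesis by simp
    qed simp
    have "\<bar>X $ i $ j * (X $ i $ j * cf \<gamma> (?S j) + zz X y $ j * ?d j)\<bar>
        = \<bar>X $ i $ j\<bar> * \<bar>X $ i $ j * cf \<gamma> (?S j) + zz X y $ j * ?d j\<bar>" by (simp only: abs_mult)
    also have "\<dots> \<le> \<bar>X $ i $ j\<bar> * (\<bar>X $ i $ j * cf \<gamma> (?S j)\<bar> + \<bar>zz X y $ j * ?d j\<bar>)"
      by (intro mult_left_mono abs_triangle_ineq) simp
    also have "\<dots> = \<bar>X $ i $ j\<bar> * (\<bar>X $ i $ j\<bar> * \<bar>cf \<gamma> (?S j)\<bar> + \<bar>zz X y $ j * ?d j\<bar>)"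
      by (simp only: abs_mult)
    also have "\<dots> \<le> 1 * (1 * 1 + 2 * real CARD('p))"
      using Xb cf_bounds[OF \<gamma>, of "?S j"] zd
      by (intro mult_mono add_mono) auto
    finally show ?thesis by simp
  qed
  have "\<bar>Dfun X grp \<gamma> i y\<bar> \<le> (\<Sum>j\<in>UNIV. \<bar>X $ i $ j * (X $ i $ j * cf \<gamma> (?S j) + zz X y $ j * ?d j)\<bar>)"
    unfolding Dfun_def by (rule sum_abs)
  also have "\<dots> \<le> (\<Sum>j\<in>(UNIV::'p set). 1 + 2 * real CARD('p))" by (intro sum_mono termb)
  finally show ?thesis by simp
qed

lemma fit_hfun: "(X *v bstar X grp \<gamma> y) $ i = hfun X grp \<gamma> i y"
  by (simp add: hfun_def bstar_def matrix_vector_mult_def)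

lemma Dfun_sum:
  fixes X :: "real^'p::finite^'n::finite" and grp :: "'p \<Rightarrow> 'g::finite"
  assumes XX: "transpose X ** X = mat 1"
  shows "(\<Sum>i\<in>UNIV. Dfun X grp \<gamma> i y) = (\<Sum>j\<in>UNIV. if \<gamma> < Sg X grp y (grp j)
     then 1 - \<gamma> / Sg X grp y (grp j) + 2 * \<gamma> * (zz X y $ j)\<^sup>2 / (Sg X grp y (grp j))\<^sup>2 else 0)"
proof -
  let ?S = "\<lambda>j. Sg X grp y (grp j)"
  let ?z = "\<lambda>k. zz X y $ k"
  have inner: "(\<Sum>i\<in>UNIV. X $ i $ j * (X $ i $ j * cf \<gamma> (?S j) + ?z j * (if \<gamma> < ?S j
        then \<gamma> * (2 * (\<Sum>k\<in>{k. grp k = grp j}. X $ i $ k * ?z k)) / (?S j)\<^sup>2 else 0)))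
     = (if \<gamma> < ?S j then 1 - \<gamma> / ?S j + 2 * \<gamma> * (?z j)\<^sup>2 / (?S j)\<^sup>2 else 0)" for j
  proof (cases "\<gamma> < ?S j")
    case True
    have c1: "(\<Sum>i\<in>UNIV. X $ i $ j * X $ i $ j) = 1" using colsum[OF XX, of j j] by simp
    have c2: "(\<Sum>i\<in>UNIV. X $ i $ j * (\<Sum>k\<in>{k. grp k = grp j}. X $ i $ k * ?z k)) = ?z j"
    proof -
      have "(\<Sum>i\<in>UNIV. X $ i $ j * (\<Sum>k\<in>{k. grp k = grp j}. X $ i $ k * ?z k))
        = (\<Sum>k\<in>{k. grp k = grp j}. (\<Sum>i\<in>UNIV. X $ i $ j * X $ i $ k) * ?z k)"
        by (simp add: sum_distrib_left sum_distrib_right mult.assoc sum.swap[where A = "UNIV :: 'n set"])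
      also have "\<dots> = (\<Sum>k\<in>{k. grp k = grp j}. (if j = k then ?z k else 0))"
        by (intro sum.cong refl) (simp add: colsum[OF XX])
      also have "\<dots> = ?z j" by simp
      finally show ?thesis .
    qed
    have "(\<Sum>i\<in>UNIV. X $ i $ j * (X $ i $ j * cf \<gamma> (?S j) + ?z j * (\<gamma> * (2 * (\<Sum>k\<in>{k. grp k = grp j}. X $ i $ k * ?z k)) / (?S j)\<^sup>2)))
      = cf \<gamma> (?S j) * (\<Sum>i\<in>UNIV. X $ i $ j * X $ i $ j)
        + ?z j * (2 * \<gamma> / (?S j)\<^sup>2) * (\<Sum>i\<in>UNIV. X $ i $ j * (\<Sum>k\<in>{k. grp k = grp j}. X $ i $ k * ?z k))"
      by (simp add: sum.distrib sum_distrib_left sum_divide_distrib algebra_simps)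
    also have "\<dots> = (1 - \<gamma> / ?S j) + 2 * \<gamma> * (?z j)\<^sup>2 / (?S j)\<^sup>2"
      unfolding c1 c2 using True by (simp add: cf_def power2_eq_square)
    finally show ?thesis using True by simp
  next
    case False then show ?thesis by (simp add: cf_def)
  qed
  show ?thesis
    unfolding Dfun_def by (subst sum.swap) (simp only: inner)
qed

lemma meas_zz[measurable]: "(\<lambda>y. zz X y $ j) \<in> borel_measurable borel"
  by (rule borel_measurable_continuous_onI[OF continuous_zz])

lemma meas_Sg[measurable]: "(\<lambda>y. Sg X grp y g) \<in> borel_measurable borel"
  unfolding Sg_def by measurable

lemma meas_cf[measurable]: "cf \<gamma> \<in> borel_measurable borel"
  unfolding cf_def by measurable

lemma meas_Dfun[measurable]: "Dfun X grp \<gamma> i \<in> borel_measurable borel"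
  unfolding Dfun_def by measurable

lemma meas_hfun[measurable]: "hfun X grp \<gamma> i \<in> borel_measurable borel"
  unfolding hfun_def by measurable


lemma coord_lemmas:
  fixes m :: "'n::finite \<Rightarrow> real" and k :: 'n
  assumes \<sigma>: "0 < \<sigma>"
  defines "P \<equiv> PiM UNIV (\<lambda>k. density lborel (normal_density (m k) \<sigma>))"
  shows "prob_space P" "integrable P (\<lambda>f. f k)" "integrable P (\<lambda>f. (f k)\<^sup>2)" "(\<integral>f. f k \<partial>P) = m k"
    "vec_lambda \<in> borel_measurable P"
proof -
  let ?N = "\<lambda>k. density lborel (normal_density (m k) \<sigma>)"
  interpret PP: product_prob_space ?N "UNIV :: 'n set"
    unfolding product_prob_space_def product_prob_space_axioms_def product_sigma_finite_def
    using prob_space_normal_density[OF \<sigma>] prob_space_imp_sigma_finite by blast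
  show "prob_space P" unfolding P_def by (rule PP.prob_space_P) auto
  have comp: "distr P (?N k) (\<lambda>f. f k) = ?N k" unfolding P_def by (rule PP.PiM_component) simp
  have cm: "(\<lambda>f. f k) \<in> measurable P (?N k)" unfolding P_def by (rule measurable_component_singleton) simp
  have ci: "integrable P (\<lambda>f. g (f k))" if g: "g \<in> borel_measurable borel"
      and gi: "integrable lborel (\<lambda>t. normal_density (m k) \<sigma> t * g t)" for g
  proof -
    have "integrable (?N k) g"
      using gi g by (subst integrable_density) (auto simp: normal_density_nonneg)
    then have "integrable (distr P (?N k) (\<lambda>f. f k)) g" by (simp only: comp)
    then show ?thesis by (subst (asm) integrable_distr_eq[OF cm]) (use g in auto)
  qed
  have i0: "integrable lborel (\<lambda>t. normal_density (m k) \<sigma> t * (t - m k) ^ j)" for j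
    by (rule integrable_normal_moment[OF \<sigma>])
  have i1: "integrable lborel (\<lambda>t. normal_density (m k) \<sigma> t * t)"
    by (rule integrable_normal_moment_nz_1[OF \<sigma>])
  show "integrable P (\<lambda>f. f k)" using ci[of "\<lambda>t. t"] i1 by simp
  have i2: "integrable lborel (\<lambda>t. normal_density (m k) \<sigma> t * t\<^sup>2)"
  proof -
    have "integrable lborel (\<lambda>t. normal_density (m k) \<sigma> t * (t - m k) ^ 2 + 2 * m k * (normal_density (m k) \<sigma> t * t) - (m k)\<^sup>2 * (normal_density (m k) \<sigma> t * (t - m k) ^ 0))"
      using i0 i1 i0[of 0] by (intro Bochner_Integration.integrable_add Bochner_Integration.integrable_diff integrable_mult_right) auto
    then show ?thesis by (simp add: power2_eq_square algebra_simps)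
  qed
  show "integrable P (\<lambda>f. (f k)\<^sup>2)" using ci[of "\<lambda>t. t\<^sup>2"] i2 by simp
  have "(\<integral>f. f k \<partial>P) = (\<integral>t. t \<partial>distr P (?N k) (\<lambda>f. f k))"
    by (rule integral_distr[symmetric, OF cm]) simp
  also have "\<dots> = (\<integral>t. t \<partial>?N k)" by (simp only: comp)
  also have "\<dots> = (\<integral>t. normal_density (m k) \<sigma> t * t \<partial>lborel)"
    by (subst integral_density) (auto simp: normal_density_nonneg)
  also have "\<dots> = m k" by (rule integral_normal_moment_nz_1[OF \<sigma>])
  finally show "(\<integral>f. f k \<partial>P) = m k" .
  have "sets P = sets (PiM UNIV (\<lambda>_. lborel :: real measure))"
    unfolding P_def by (intro sets_PiM_cong) simp_all
  then show "vec_lambda \<in> borel_measurable P"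
    using measurable_vec_lambda_lborel measurable_cong_sets by blast
qed


lemma abs_le_1_sq: "\<bar>x::real\<bar> \<le> 1 + x\<^sup>2"
proof -
  have "0 \<le> (\<bar>x\<bar> - 1)\<^sup>2" by simp
  then have "2 * \<bar>x\<bar> \<le> 1 + x\<^sup>2" by (simp add: power2_eq_square algebra_simps abs_mult_self_eq)
  then show ?thesis by simp
qed

lemma abs_prod_le_sq: "\<bar>a::real\<bar> * \<bar>b\<bar> \<le> a\<^sup>2 + b\<^sup>2"
proof -
  have "0 \<le> (\<bar>a\<bar> - \<bar>b\<bar>)\<^sup>2" by simp
  then have "2 * (\<bar>a\<bar> * \<bar>b\<bar>) \<le> a\<^sup>2 + b\<^sup>2" by (simp add: power2_eq_square algebra_simps abs_mult_self_eq)
  moreover have "0 \<le> \<bar>a\<bar> * \<bar>b\<bar>" by simp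
  ultimately show ?thesis by linarith
qed

lemma line_vec: "vec_lambda (x(i := t)) = vec_lambda (x(i := 0)) + t *\<^sub>R axis i (1::real)"
  by (simp add: vec_eq_iff axis_def)

lemma stein_i:
  fixes X :: "real^'p::finite^'n::finite" and grp :: "'p \<Rightarrow> 'g::finite" and m :: "'n \<Rightarrow> real"
  assumes XX: "transpose X ** X = mat 1" and \<sigma>: "0 < \<sigma>" and \<gamma>: "0 < \<gamma>"
  defines "P \<equiv> PiM UNIV (\<lambda>k. density lborel (normal_density (m k) \<sigma>))"
  shows "integrable P (\<lambda>f. Dfun X grp \<gamma> i (vec_lambda f))"
    "integrable P (\<lambda>f. hfun X grp \<gamma> i (vec_lambda f))"
    "integrable P (\<lambda>f. (f i - m i) * hfun X grp \<gamma> i (vec_lambda f))"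
    "(\<integral>f. (f i - m i) * hfun X grp \<gamma> i (vec_lambda f) \<partial>P) = \<sigma>\<^sup>2 * (\<integral>f. Dfun X grp \<gamma> i (vec_lambda f) \<partial>P)"
proof -
  note cl = coord_lemmas[OF \<sigma>, of m, folded P_def]
  interpret Pr: prob_space P by (rule cl(1))
  let ?C = "real CARD('p)"
  let ?h = "\<lambda>f. hfun X grp \<gamma> i (vec_lambda f)"
  let ?D = "\<lambda>f. Dfun X grp \<gamma> i (vec_lambda f)"
  have vm: "vec_lambda \<in> borel_measurable P" by (rule cl(5))
  have hm: "?h \<in> borel_measurable P" using measurable_comp[OF vm meas_hfun] by (simp add: comp_def)
  have Dm: "?D \<in> borel_measurable P" using measurable_comp[OF vm meas_Dfun] by (simp add: comp_def)
  have cm: "(\<lambda>f. f k) \<in> borel_measurable P" for k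
    unfolding P_def by measurable
  have isq: "integrable P (\<lambda>f. (f k)\<^sup>2)" for k by (rule cl(3))
  have iS: "integrable P (\<lambda>f. \<Sum>k\<in>UNIV. 1 + (f k)\<^sup>2)"
    using isq by (intro Bochner_Integration.integrable_sum Bochner_Integration.integrable_add) auto
  have hb: "\<bar>?h f\<bar> \<le> ?C * (\<Sum>k\<in>UNIV. 1 + (f k)\<^sup>2)" for f
  proof -
    have "\<bar>?h f\<bar> \<le> ?C * (\<Sum>k\<in>UNIV. \<bar>vec_lambda f $ k\<bar>)" by (rule hfun_bound[OF XX \<gamma>])
    also have "\<dots> \<le> ?C * (\<Sum>k\<in>UNIV. 1 + (f k)\<^sup>2)"
      by (intro mult_left_mono sum_mono) (auto simp: abs_le_1_sq)
    finally show ?thesis .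
  qed
  show ih: "integrable P ?h"
  proof (rule Bochner_Integration.integrable_bound[where f="\<lambda>f. ?C * (\<Sum>k\<in>UNIV. 1 + (f k)\<^sup>2)"])
    show "integrable P (\<lambda>f. ?C * (\<Sum>k\<in>UNIV. 1 + (f k)\<^sup>2))" using iS by auto
    show "AE f in P. norm (?h f) \<le> norm (?C * (\<Sum>k\<in>UNIV. 1 + (f k)\<^sup>2))"
      using hb by (intro AE_I2) (auto intro: order_trans[OF _ abs_ge_self])
  qed (rule hm)
  have Fb: "\<bar>(f i - m i) * ?h f\<bar> \<le> ?C * (\<Sum>k\<in>UNIV. 2 * (f i)\<^sup>2 + 2 * (m i)\<^sup>2 + (f k)\<^sup>2)" for f
  proof -
    have "\<bar>(f i - m i) * ?h f\<bar> \<le> \<bar>f i - m i\<bar> * (?C * (\<Sum>k\<in>UNIV. \<bar>f k\<bar>))"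
      using hfun_bound[OF XX \<gamma>, of grp i "vec_lambda f"] by (simp add: abs_mult mult_left_mono)
    also have "\<dots> = ?C * (\<Sum>k\<in>UNIV. \<bar>f i - m i\<bar> * \<bar>f k\<bar>)" by (simp add: sum_distrib_left algebra_simps)
    also have "\<dots> \<le> ?C * (\<Sum>k\<in>UNIV. 2 * (f i)\<^sup>2 + 2 * (m i)\<^sup>2 + (f k)\<^sup>2)"
    proof (intro mult_left_mono sum_mono)
      fix k
      have "\<bar>f i - m i\<bar> * \<bar>f k\<bar> \<le> (f i - m i)\<^sup>2 + (f k)\<^sup>2" by (rule abs_prod_le_sq)
      also have "(f i - m i)\<^sup>2 \<le> 2 * (f i)\<^sup>2 + 2 * (m i)\<^sup>2"
      proof -
        have "0 \<le> (f i + m i)\<^sup>2" by simp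
        then show ?thesis unfolding power2_diff power2_sum by linarith
      qed
      finally show "\<bar>f i - m i\<bar> * \<bar>f k\<bar> \<le> 2 * (f i)\<^sup>2 + 2 * (m i)\<^sup>2 + (f k)\<^sup>2" by simp
    qed simp
    finally show ?thesis .
  qed
  have intF: "integrable P (\<lambda>f. (f i - m i) * ?h f)"
  proof (rule Bochner_Integration.integrable_bound[where f="\<lambda>f. ?C * (\<Sum>k\<in>UNIV. 2 * (f i)\<^sup>2 + 2 * (m i)\<^sup>2 + (f k)\<^sup>2)"])
    show "integrable P (\<lambda>f. ?C * (\<Sum>k\<in>UNIV. 2 * (f i)\<^sup>2 + 2 * (m i)\<^sup>2 + (f k)\<^sup>2))"
      using isq by (intro integrable_mult_right Bochner_Integration.integrable_sum Bochner_Integration.integrable_add) auto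
    show "(\<lambda>f. (f i - m i) * ?h f) \<in> borel_measurable P" using hm cm by measurable
    show "AE f in P. norm ((f i - m i) * ?h f) \<le> norm (?C * (\<Sum>k\<in>UNIV. 2 * (f i)\<^sup>2 + 2 * (m i)\<^sup>2 + (f k)\<^sup>2))"
      using Fb by (intro AE_I2) (auto intro: order_trans[OF _ abs_ge_self])
  qed
  then show "integrable P (\<lambda>f. (f i - m i) * ?h f)" .
  have hc: "continuous_on UNIV (\<lambda>t. ?h (x(i := t)))" for x
  proof -
    define y0 where "y0 = (vec_lambda (x(i := 0)) :: real^'n)"
    have lv: "vec_lambda (x(i := t)) = y0 + t *\<^sub>R axis i 1" for t unfolding y0_def by (rule line_vec)
    have "continuous_on UNIV (\<lambda>t. hfun X grp \<gamma> i (y0 + t *\<^sub>R axis i 1))"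
      by (rule continuous_on_compose2[OF continuous_hfun[OF \<gamma>]]) (auto intro!: continuous_intros)
    then show ?thesis unfolding lv .
  qed
  have hd: "\<exists>S. finite S \<and> (\<forall>t. t \<notin> S \<longrightarrow> ((\<lambda>t. ?h (x(i := t))) has_real_derivative ?D (x(i := t))) (at t))" for x
  proof -
    define y0 where "y0 = (vec_lambda (x(i := 0)) :: real^'n)"
    have lv: "vec_lambda (x(i := t)) = y0 + t *\<^sub>R axis i 1" for t unfolding y0_def by (rule line_vec)
    show ?thesis unfolding lv by (rule h_line_deriv[OF \<gamma>])
  qed
  have hg: "\<exists>A B. \<forall>t. \<bar>?h (x(i := t))\<bar> \<le> A + B * \<bar>t\<bar>" for x
  proof (intro exI allI)
    fix t
    let ?y0 = "vec_lambda (x(i := 0)) :: real^'n"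
    have lv: "vec_lambda (x(i := t)) = ?y0 + t *\<^sub>R axis i 1" by (rule line_vec)
    have "\<bar>?h (x(i := t))\<bar> \<le> ?C * (\<Sum>k\<in>UNIV. \<bar>(?y0 + t *\<^sub>R axis i 1) $ k\<bar>)"
      by (subst lv) (rule hfun_bound[OF XX \<gamma>])
    also have "\<dots> \<le> ?C * (\<Sum>k\<in>UNIV. \<bar>?y0 $ k\<bar> + (if k = i then \<bar>t\<bar> else 0))"
      by (intro mult_left_mono sum_mono) (auto simp: axis_def)
    also have "\<dots> = ?C * (\<Sum>k\<in>UNIV. \<bar>?y0 $ k\<bar>) + ?C * \<bar>t\<bar>"
      by (simp add: sum.distrib algebra_simps)
    finally show "\<bar>?h (x(i := t))\<bar> \<le> ?C * (\<Sum>k\<in>UNIV. \<bar>?y0 $ k\<bar>) + ?C * \<bar>t\<bar>" .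
  qed
  note sp = stein_prod[OF \<sigma>, where \<mu>=m and h="?h" and D="?D" and i=i, folded P_def, OF hm Dm Dfun_bound[OF XX \<gamma>] intF hc hd hg]
  show "integrable P ?D" by (rule sp(1))
  show "(\<integral>f. (f i - m i) * ?h f \<partial>P) = \<sigma>\<^sup>2 * (\<integral>f. ?D f \<partial>P)" by (rule sp(2))
qed


theorem corollary6:
  fixes X :: "real^'p::finite^'n::finite" and grp :: "'p \<Rightarrow> 'g::finite"
    and \<beta> :: "real^'p" and \<sigma> \<gamma> :: real
  assumes "transpose X ** X = mat 1"
    and "\<sigma> > 0" and "\<gamma> > 0"
  shows "integrable (gauss_vec (X *v \<beta>) \<sigma>) (dfhat X grp \<gamma>)
    \<and> (LINT y|gauss_vec (X *v \<beta>) \<sigma>. dfhat X grp \<gamma> y)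
        = dof (gauss_vec (X *v \<beta>) \<sigma>) \<sigma> (agl_fit X grp \<gamma>)"
proof -
  note XX = assms(1) and \<sigma> = assms(2) and \<gamma> = assms(3)
  define \<mu> where "\<mu> = X *v \<beta>"
  define m where "m = (\<lambda>k. \<mu> $ k)"
  define P where "P = PiM UNIV (\<lambda>k. density lborel (normal_density (m k) \<sigma>))"
  have GP: "gauss_vec \<mu> \<sigma> = distr P borel vec_lambda"
    unfolding gauss_vec_eq[OF \<sigma>] NP_def P_def m_def ..
  note cl = coord_lemmas[OF \<sigma>, of m, folded P_def]
  interpret Pr: prob_space P by (rule cl(1))
  have vm: "vec_lambda \<in> measurable P borel" by (rule cl(5))
  have dfeq: "dfhat X grp \<gamma> = (\<lambda>y. \<Sum>i\<in>UNIV. Dfun X grp \<gamma> i y)"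
    by (rule ext) (simp add: dfhat_eq[OF XX \<gamma>] Dfun_sum[OF XX])
  have dfm: "dfhat X grp \<gamma> \<in> borel_measurable borel" unfolding dfeq by measurable
  have fit: "agl_fit X grp \<gamma> y $ i = hfun X grp \<gamma> i y" for y i
    by (simp add: agl_fit_def agl_beta_eq[OF XX \<gamma>] fit_hfun)
  have si: "integrable P (\<lambda>f. Dfun X grp \<gamma> i (vec_lambda f))"
    "integrable P (\<lambda>f. hfun X grp \<gamma> i (vec_lambda f))"
    "integrable P (\<lambda>f. (f i - m i) * hfun X grp \<gamma> i (vec_lambda f))"
    "(\<integral>f. (f i - m i) * hfun X grp \<gamma> i (vec_lambda f) \<partial>P) = \<sigma>\<^sup>2 * (\<integral>f. Dfun X grp \<gamma> i (vec_lambda f) \<partial>P)"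
    for i
    using stein_i[OF XX \<sigma> \<gamma>, where grp=grp and m=m and i=i] unfolding P_def by auto
  have int_sum: "integrable P (\<lambda>f. \<Sum>i\<in>UNIV. Dfun X grp \<gamma> i (vec_lambda f))"
    using si(1) by (intro Bochner_Integration.integrable_sum) auto
  have integ: "integrable (gauss_vec \<mu> \<sigma>) (dfhat X grp \<gamma>)"
    unfolding GP by (subst integrable_distr_eq[OF vm dfm]) (simp add: dfeq int_sum)
  have lint: "(LINT y|gauss_vec \<mu> \<sigma>. dfhat X grp \<gamma> y) = (\<Sum>i\<in>UNIV. \<integral>f. Dfun X grp \<gamma> i (vec_lambda f) \<partial>P)"
    unfolding GP by (subst integral_distr[OF vm dfm]) (simp add: dfeq Bochner_Integration.integral_sum si(1))
  have cov: "covar (gauss_vec \<mu> \<sigma>) (\<lambda>y. y $ i) (\<lambda>y. agl_fit X grp \<gamma> y $ i)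
      = \<sigma>\<^sup>2 * (\<integral>f. Dfun X grp \<gamma> i (vec_lambda f) \<partial>P)" for i
  proof -
    let ?h = "\<lambda>f. hfun X grp \<gamma> i (vec_lambda f)"
    define c where "c = (\<integral>f. ?h f \<partial>P)"
    have m1: "(\<lambda>y. y $ i) \<in> borel_measurable (borel :: (real^'n) measure)" by measurable
    have m2: "(\<lambda>y. agl_fit X grp \<gamma> y $ i) \<in> borel_measurable borel" unfolding fit by measurable
    have e1: "(LINT z|gauss_vec \<mu> \<sigma>. z $ i) = m i"
      unfolding GP by (subst integral_distr[OF vm m1]) (simp add: cl(4))
    have e2: "(LINT z|gauss_vec \<mu> \<sigma>. agl_fit X grp \<gamma> z $ i) = c"
      unfolding GP c_def by (subst integral_distr[OF vm m2]) (simp add: fit)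
    have "covar (gauss_vec \<mu> \<sigma>) (\<lambda>y. y $ i) (\<lambda>y. agl_fit X grp \<gamma> y $ i)
       = (LINT y|gauss_vec \<mu> \<sigma>. (y $ i - m i) * (agl_fit X grp \<gamma> y $ i - c))"
      unfolding covar_def e1 e2 ..
    also have "\<dots> = (\<integral>f. (f i - m i) * (?h f - c) \<partial>P)"
      unfolding GP using m1 m2 by (subst integral_distr[OF vm]) (auto simp: fit)
    also have "\<dots> = (\<integral>f. (f i - m i) * ?h f - c * (f i - m i) \<partial>P)"
      by (simp add: algebra_simps)
    also have "\<dots> = (\<integral>f. (f i - m i) * ?h f \<partial>P) - c * ((\<integral>f. f i \<partial>P) - m i)"
      using si(3) cl(2) by (simp add: Bochner_Integration.integral_diff Pr.prob_space)
    also have "\<dots> = \<sigma>\<^sup>2 * (\<integral>f. Dfun X grp \<gamma> i (vec_lambda f) \<partial>P)"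
      by (simp add: cl(4) si(4))
    finally show ?thesis .
  qed
  have "dof (gauss_vec \<mu> \<sigma>) \<sigma> (agl_fit X grp \<gamma>) = (\<Sum>i\<in>UNIV. \<integral>f. Dfun X grp \<gamma> i (vec_lambda f) \<partial>P)"
    unfolding dof_def cov using \<sigma> by (simp add: sum_distrib_left)
  then show ?thesis using integ lint unfolding \<mu>_def by simp
qed

end
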